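(* Let $s\ge2$ and $\alpha>0$. For integers $2\le i\le j$, let $I_i=[i,i+\alpha\log i]$ and $I_j=[j,j+\alpha\log j]$. Then $$\sum_{\substack{\omega\sim\omega'\\ \omega\in\Omega_{I_i},\ \omega'\in\Omega_{I_j}}}P(E_\omega\cap E_{\omega'})\ll i^{-1/s}(\log i)^2(\log j),$$ with implied constant depending only on $s$ and $\alpha$.
   Context: Let $A\subseteq\{1,2,\dots\}$ be a random set in which the events $\{n\in A\}$ are mutually independent with $P(n\in A)=\frac1s n^{-1+1/s}$. For a finite set $\omega$ of distinct positive integers, $E_\omega$ is the event $\{\omega\subseteq A\}$. For $\omega=\{x_1,\dots,x_r\}$ define $\sigma(\omega)=\{a_1x_1+\cdots+a_rx_r: a_1+\cdots+a_r=s,\ a_i\ge1 \text{ integers}\}$. For an interval $I$, $\Omega_I=\{\omega:\sigma(\omega)\cap I\neq\emptyset\}$. We write $\omega\sim\omega'$ if $\omega\cap\omega'\neq\emptyset$ and $\omega\neq\omega'$. *)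

theory Defs
  imports "HOL-Probability.Probability"
begin

definition incl_prob :: "nat \<Rightarrow> nat \<Rightarrow> real" where
  "incl_prob s n = (1 / real s) * real n powr (-1 + 1 / real s)"

definition sigma_set :: "nat \<Rightarrow> nat set \<Rightarrow> nat set" where
  "sigma_set s \<omega> = {(\<Sum>x\<in>\<omega>. a x * x) | a. (\<forall>x\<in>\<omega>. 1 \<le> a x) \<and> (\<Sum>x\<in>\<omega>. a x) = s}"

definition Omega_I :: "nat \<Rightarrow> real \<Rightarrow> real \<Rightarrow> nat set set" where
  "Omega_I s lo hi = {\<omega>. finite \<omega> \<and> \<omega> \<subseteq> {1..} \<and>
      (\<exists>m\<in>sigma_set s \<omega>. lo \<le> real m \<and> real m \<le> hi)}"

definition related :: "nat set \<Rightarrow> nat set \<Rightarrow> bool" where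
  "related \<omega> \<omega>' \<longleftrightarrow> \<omega> \<inter> \<omega>' \<noteq> {} \<and> \<omega> \<noteq> \<omega>'"

definition event_E :: "'a measure \<Rightarrow> ('a \<Rightarrow> nat set) \<Rightarrow> nat set \<Rightarrow> 'a set" where
  "event_E M A \<omega> = {x \<in> space M. \<omega> \<subseteq> A x}"

end

theory Submission
  imports Defs
begin

locale ctx = fixes s :: nat assumes s2: "s \<ge> 2"
begin

definition bt :: real where "bt = 1 / real s"

lemma bt_pos: "0 < bt" and bt_le: "bt \<le> 1/2" and s_bt: "real s * bt = 1"
  using s2 by (auto simp: bt_def field_simps)

lemma p_nonneg: "0 \<le> incl_prob s n"
  by (simp add: incl_prob_def)

lemma p_le: assumes "0 < t" "t \<le> real n"
  shows "incl_prob s n \<le> (1 / real s) * t powr (bt - 1)"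
proof -
  have "real n powr (bt - 1) \<le> t powr (bt - 1)"
    using assms bt_le by (intro powr_mono2') auto
  moreover have "-1 + 1 / real s = bt - 1" by (simp add: bt_def)
  ultimately show ?thesis unfolding incl_prob_def
    using bt_pos by (intro mult_left_mono) auto
qed

lemma p_le1: "incl_prob s n \<le> 1"
proof (cases "n = 0")
  case True thus ?thesis by (simp add: incl_prob_def)
next
  case False
  have "incl_prob s n \<le> (1 / real s) * 1 powr (bt - 1)" using False by (intro p_le) auto
  also have "\<dots> \<le> 1" using s2 by simp
  finally show ?thesis .
qed

lemma step_ineq: assumes "n \<ge> (1::nat)"
  shows "bt * real n powr (bt - 1) \<le> real n powr bt - real (n - 1) powr bt"
proof (cases "n = 1")
  case True thus ?thesis using bt_pos bt_le by simp
next
  case False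
  hence n2: "n \<ge> 2" using assms by auto
  have "\<exists>z. real (n-1) < z \<and> z < real n \<and>
      real n powr bt - real (n-1) powr bt = (real n - real (n-1)) * (bt * z powr (bt - 1))"
  proof (rule MVT2)
    show "real (n-1) < real n" using n2 by simp
    show "((\<lambda>a. a powr bt) has_real_derivative bt * x powr (bt - 1)) (at x)"
      if "real (n - 1) \<le> x" "x \<le> real n" for x
    proof -
      have "x > 0" proof -
        have "real (n-1) \<ge> 1" using n2 by (simp add: of_nat_diff)
        thus ?thesis using that by linarith
      qed
      thus "((\<lambda>a. a powr bt) has_real_derivative bt * x powr (bt - 1)) (at x)"
        by (rule has_real_derivative_powr)
    qed
  qed
  then obtain z where z: "real (n-1) < z" "z < real n"
     "real n powr bt - real (n-1) powr bt = (real n - real (n-1)) * (bt * z powr (bt - 1))" by blast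
  have "real n - real (n-1) = 1" using n2 by (simp add: of_nat_diff)
  moreover have "real n powr (bt - 1) \<le> z powr (bt - 1)"
    using z n2 bt_le by (intro powr_mono2') auto
  ultimately show ?thesis using z(3) bt_pos by simp
qed

lemma sum_powr_le: "(\<Sum>n\<in>{1..N}. real n powr (bt - 1)) \<le> real N powr bt / bt"
proof (induction N)
  case 0 thus ?case by simp
next
  case (Suc N)
  have "(\<Sum>n\<in>{1..Suc N}. real n powr (bt - 1)) = (\<Sum>n\<in>{1..N}. real n powr (bt - 1)) + real (Suc N) powr (bt - 1)"
    by simp
  also have "\<dots> \<le> real N powr bt / bt + (real (Suc N) powr bt - real N powr bt) / bt"
    using Suc step_ineq[of "Suc N"] bt_pos by (simp add: field_simps)
  also have "\<dots> = real (Suc N) powr bt / bt" by (simp add: diff_divide_distrib)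
  finally show ?case .
qed

lemma sum_p_le: "(\<Sum>n\<in>{1..N}. incl_prob s n) \<le> real N powr bt"
proof -
  have "(\<Sum>n\<in>{1..N}. incl_prob s n) = (1 / real s) * (\<Sum>n\<in>{1..N}. real n powr (bt - 1))"
    by (simp add: incl_prob_def bt_def sum_distrib_left algebra_simps)
  also have "\<dots> \<le> (1 / real s) * (real N powr bt / bt)"
    using s2 by (intro mult_left_mono sum_powr_le) auto
  also have "\<dots> = real N powr bt" using s2 by (simp add: bt_def)
  finally show ?thesis .
qed

lemma harm_le: "(\<Sum>n\<in>{1..N}. 1 / real n) \<le> 1 + ln (real N)" if "N \<ge> 1"
  using that
proof (induction N rule: dec_induct)
  case base thus ?case by simp
next
  case (step N)
  have "ln (real N / real (Suc N)) \<le> real N / real (Suc N) - 1"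
    using step by (intro ln_le_minus_one) auto
  hence "1 / real (Suc N) \<le> ln (real (Suc N)) - ln (real N)"
    using step by (simp add: ln_div field_simps)
  thus ?case using step by simp
qed

end


lemma sum_inj_le:
  fixes g :: "'a \<Rightarrow> real" and h :: "'b \<Rightarrow> real"
  assumes "finite B" "inj_on \<phi> A" "\<phi> ` A \<subseteq> B" "\<And>a. a\<in>A \<Longrightarrow> g a \<le> h (\<phi> a)" "\<And>b. b\<in>B \<Longrightarrow> 0 \<le> h b"
  shows "sum g A \<le> sum h B"
proof -
  have "finite (\<phi> ` A)" using assms(1,3) finite_subset by blast
  hence fA: "finite A" using assms(2) finite_imageD by blast
  have "sum g A \<le> sum (h \<circ> \<phi>) A" using assms(4) by (intro sum_mono) auto
  also have "\<dots> = sum h (\<phi> ` A)" using assms(2) by (simp add: sum.reindex)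
  also have "\<dots> \<le> sum h B" using assms by (intro sum_mono2) auto
  finally show ?thesis .
qed

lemma free_exact:
  fixes q :: "nat \<Rightarrow> real"
  assumes "finite S" "\<And>x. 0 \<le> q x"
  shows "(\<Sum>A\<in>{A. A \<subseteq> S \<and> card A = h}. prod q A) \<le> (sum q S) ^ h"
proof (induction h)
  case 0
  have "{A. A \<subseteq> S \<and> card A = 0} = {{}}" using assms(1) by (auto, metis card_eq_0_iff emptyE finite_subset)
  thus ?case by simp
next
  case (Suc h)
  let ?F = "{A. A \<subseteq> S \<and> card A = h}"
  have "(\<Sum>A\<in>{A. A \<subseteq> S \<and> card A = Suc h}. prod q A) \<le> (\<Sum>(A,v)\<in>?F \<times> S. prod q A * q v)"
  proof (rule sum_inj_le[where \<phi>="\<lambda>B. (B - {Max B}, Max B)"])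
    show "finite (?F \<times> S)" using assms(1) by (auto intro: finite_subset)
    show "inj_on (\<lambda>B. (B - {Max B}, Max B)) {A. A \<subseteq> S \<and> card A = Suc h}"
    proof (rule inj_onI)
      fix B C assume B: "B \<in> {A. A \<subseteq> S \<and> card A = Suc h}" and C: "C \<in> {A. A \<subseteq> S \<and> card A = Suc h}"
        and e: "(B - {Max B}, Max B) = (C - {Max C}, Max C)"
      have "B \<noteq> {}" "C \<noteq> {}" "finite B" "finite C" using B C assms(1) by (auto intro: finite_subset)
      hence "Max B \<in> B" "Max C \<in> C" by auto
      thus "B = C" using e by (metis Pair_inject insert_Diff)
    qed
    show "(\<lambda>B. (B - {Max B}, Max B)) ` {A. A \<subseteq> S \<and> card A = Suc h} \<subseteq> ?F \<times> S"
    proof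
      fix y assume "y \<in> (\<lambda>B. (B - {Max B}, Max B)) ` {A. A \<subseteq> S \<and> card A = Suc h}"
      then obtain B where B: "B \<subseteq> S" "card B = Suc h" and y: "y = (B - {Max B}, Max B)" by auto
      have "B \<noteq> {}" "finite B" using B assms(1) by (auto intro: finite_subset)
      hence "Max B \<in> B" by auto
      thus "y \<in> ?F \<times> S" using B y \<open>finite B\<close> by auto
    qed
    show "prod q B \<le> (case (B - {Max B}, Max B) of (A, v) \<Rightarrow> prod q A * q v)"
      if "B \<in> {A. A \<subseteq> S \<and> card A = Suc h}" for B
    proof -
      have "B \<noteq> {}" "finite B" using that assms(1) by (auto intro: finite_subset)
      hence "Max B \<in> B" by auto
      hence "prod q B = q (Max B) * prod q (B - {Max B})" using prod.remove[OF \<open>finite B\<close>] by blast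
      thus ?thesis by simp
    qed
    show "0 \<le> (case b of (A, v) \<Rightarrow> prod q A * q v)" for b
      using assms(2) by (auto simp: prod_nonneg split: prod.splits)
  qed
  also have "\<dots> = (\<Sum>A\<in>?F. prod q A) * sum q S"
    by (simp add: sum.cartesian_product[symmetric] sum_product)
  also have "\<dots> \<le> (sum q S) ^ h * sum q S"
    using Suc.IH assms(2) by (intro mult_right_mono) (auto intro: sum_nonneg)
  finally show ?case by (simp add: mult.commute)
qed

lemma free_le:
  fixes q :: "nat \<Rightarrow> real"
  assumes "finite S" "\<And>x. 0 \<le> q x"
  shows "(\<Sum>A\<in>{A. A \<subseteq> S \<and> card A \<le> H}. prod q A) \<le> (\<Sum>h\<le>H. (sum q S) ^ h)"
proof (induction H)
  case 0
  thus ?case using free_exact[where q=q and S=S and h=0, OF assms] by simp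
next
  case (Suc H)
  have e: "{A. A \<subseteq> S \<and> card A \<le> Suc H} = {A. A \<subseteq> S \<and> card A \<le> H} \<union> {A. A \<subseteq> S \<and> card A = Suc H}"
    by auto
  have f: "finite {A. A \<subseteq> S \<and> card A \<le> H}" "finite {A. A \<subseteq> S \<and> card A = Suc H}"
    using assms(1) by (auto intro: finite_subset)
  have "(\<Sum>A\<in>{A. A \<subseteq> S \<and> card A \<le> Suc H}. prod q A) =
     (\<Sum>A\<in>{A. A \<subseteq> S \<and> card A \<le> H}. prod q A) + (\<Sum>A\<in>{A. A \<subseteq> S \<and> card A = Suc H}. prod q A)"
    unfolding e by (rule sum.union_disjoint[OF f]) auto
  also have "\<dots> \<le> (\<Sum>h\<le>H. (sum q S) ^ h) + (sum q S) ^ Suc H"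
    using Suc.IH free_exact[where q=q and S=S and h="Suc H", OF assms] by linarith
  finally show ?case by simp
qed

context ctx begin

lemma Npow_ge1: "N \<ge> 1 \<Longrightarrow> 1 \<le> real N powr bt"
  using bt_pos by (simp add: ge_one_powr_ge_zero)

lemma free_N:
  assumes "N \<ge> 1"
  shows "(\<Sum>A\<in>{A. A \<subseteq> {1..N} \<and> card A \<le> H}. prod (incl_prob s) A) \<le> real (H+1) * real N powr (real H * bt)"
proof -
  have "(\<Sum>A\<in>{A. A \<subseteq> {1..N} \<and> card A \<le> H}. prod (incl_prob s) A) \<le> (\<Sum>h\<le>H. (sum (incl_prob s) {1..N}) ^ h)"
    by (rule free_le) (auto simp: p_nonneg)
  also have "\<dots> \<le> (\<Sum>h\<le>H. (real N powr bt) ^ H)"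
  proof (intro sum_mono)
    fix h assume "h \<in> {..H}"
    have "(sum (incl_prob s) {1..N}) ^ h \<le> (real N powr bt) ^ h"
      by (intro power_mono sum_p_le sum_nonneg) (auto simp: p_nonneg)
    also have "\<dots> \<le> (real N powr bt) ^ H"
      using \<open>h \<in> {..H}\<close> Npow_ge1[OF assms] by (intro power_increasing) auto
    finally show "(sum (incl_prob s) {1..N}) ^ h \<le> (real N powr bt) ^ H" .
  qed
  also have "\<dots> = real (H+1) * real N powr (real H * bt)"
    using assms by (simp add: powr_realpow[symmetric] powr_powr mult.commute)
  finally show ?thesis .
qed

end


lemma card_nat_interval:
  assumes "lo \<le> hi"
  shows "real (card {m::nat. lo \<le> real m \<and> real m \<le> hi}) \<le> hi - lo + 1"
proof (cases "{m::nat. lo \<le> real m \<and> real m \<le> hi} = {}")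
  case True thus ?thesis using assms by (simp only: card.empty)
next
  case False
  then obtain m0 :: nat where m0: "lo \<le> real m0" "real m0 \<le> hi" by auto
  have hi0: "hi \<ge> 0" using m0 by linarith
  have sub: "{m::nat. lo \<le> real m \<and> real m \<le> hi} \<subseteq> {nat \<lceil>lo\<rceil> .. nat \<lfloor>hi\<rfloor>}"
  proof
    fix m assume m: "m \<in> {m::nat. lo \<le> real m \<and> real m \<le> hi}"
    hence c1: "\<lceil>lo\<rceil> \<le> int m" by (simp add: ceiling_le_iff)
    have c2: "int m \<le> \<lfloor>hi\<rfloor>" using m by (simp add: le_floor_iff)
    show "m \<in> {nat \<lceil>lo\<rceil> .. nat \<lfloor>hi\<rfloor>}" using nat_mono[OF c1] nat_mono[OF c2] by simp
  qed
  have "card {m::nat. lo \<le> real m \<and> real m \<le> hi} \<le> card {nat \<lceil>lo\<rceil> .. nat \<lfloor>hi\<rfloor>}"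
    by (rule card_mono[OF _ sub]) simp
  also have "\<dots> = nat \<lfloor>hi\<rfloor> + 1 - nat \<lceil>lo\<rceil>" by simp
  finally have c: "card {m::nat. lo \<le> real m \<and> real m \<le> hi} \<le> nat \<lfloor>hi\<rfloor> + 1 - nat \<lceil>lo\<rceil>" .
  have r1: "real (nat \<lfloor>hi\<rfloor>) \<le> hi" using hi0 by simp
  have r2: "lo \<le> real (nat \<lceil>lo\<rceil>)"
  proof -
    have "lo \<le> of_int \<lceil>lo\<rceil>" by simp
    moreover have "of_int \<lceil>lo\<rceil> \<le> real (nat \<lceil>lo\<rceil>)" by (cases "\<lceil>lo\<rceil> \<ge> 0") auto
    ultimately show ?thesis by linarith
  qed
  show ?thesis
  proof (cases "nat \<lceil>lo\<rceil> \<le> nat \<lfloor>hi\<rfloor> + 1")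
    case True
    hence "real (nat \<lfloor>hi\<rfloor> + 1 - nat \<lceil>lo\<rceil>) = real (nat \<lfloor>hi\<rfloor>) + 1 - real (nat \<lceil>lo\<rceil>)"
      by (simp add: of_nat_diff)
    moreover have "real (card {m::nat. lo \<le> real m \<and> real m \<le> hi}) \<le> real (nat \<lfloor>hi\<rfloor> + 1 - nat \<lceil>lo\<rceil>)"
      using c by (simp only: of_nat_le_iff)
    ultimately show ?thesis using r1 r2 by linarith
  next
    case False
    hence "nat \<lfloor>hi\<rfloor> + 1 - nat \<lceil>lo\<rceil> = 0" by (simp only: not_le diff_is_0_eq)
    thus ?thesis using c assms by simp
  qed
qed

lemma card_lin_interval:
  assumes "lo \<le> hi" "(a::nat) \<ge> 1"
  shows "real (card {v::nat. lo \<le> real (a * v + c) \<and> real (a * v + c) \<le> hi}) \<le> hi - lo + 1"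
proof -
  have inj: "inj_on (\<lambda>v. a * v + c) {v::nat. lo \<le> real (a * v + c) \<and> real (a * v + c) \<le> hi}"
    using assms(2) by (intro inj_onI) auto
  have sub: "(\<lambda>v. a * v + c) ` {v::nat. lo \<le> real (a * v + c) \<and> real (a * v + c) \<le> hi} \<subseteq> {m::nat. lo \<le> real m \<and> real m \<le> hi}"
    by auto
  have fin: "finite {m::nat. lo \<le> real m \<and> real m \<le> hi}"
    by (rule finite_subset[of _ "{..nat \<lfloor>hi\<rfloor>}"]) (auto simp: le_nat_floor)
  have "card {v::nat. lo \<le> real (a * v + c) \<and> real (a * v + c) \<le> hi} \<le> card {m::nat. lo \<le> real m \<and> real m \<le> hi}"
    using card_inj_on_le[OF inj sub fin] .
  thus ?thesis using card_nat_interval[OF assms(1)]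
    by (meson of_nat_le_iff order_trans)
qed

context ctx begin

definition win :: "real \<Rightarrow> real \<Rightarrow> nat set \<Rightarrow> nat set" where
  "win lo hi R = {v. v \<notin> R \<and> (\<exists>m\<in>sigma_set s (insert v R). lo \<le> real m \<and> real m \<le> hi)}"

lemma win_sub:
  assumes "finite R"
  shows "win lo hi R \<subseteq> (\<Union>(a,b)\<in>{1..s} \<times> (R \<rightarrow>\<^sub>E {1..s}).
           {v::nat. lo \<le> real (a * v + (\<Sum>x\<in>R. b x * x)) \<and> real (a * v + (\<Sum>x\<in>R. b x * x)) \<le> hi})"
proof
  fix v assume "v \<in> win lo hi R"
  then obtain m where v: "v \<notin> R" and m: "m \<in> sigma_set s (insert v R)" "lo \<le> real m" "real m \<le> hi"
    unfolding win_def by auto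
  then obtain a where a: "m = (\<Sum>x\<in>insert v R. a x * x)" "\<forall>x\<in>insert v R. 1 \<le> a x"
      "(\<Sum>x\<in>insert v R. a x) = s"
    unfolding sigma_set_def by auto
  have fi: "finite (insert v R)" using assms by simp
  have ale: "a x \<le> s" if "x \<in> insert v R" for x
    using member_le_sum[OF that _ fi, of a] a(3) by simp
  let ?b = "restrict a R"
  have b: "?b \<in> R \<rightarrow>\<^sub>E {1..s}" using a(2) ale by auto
  have "m = a v * v + (\<Sum>x\<in>R. a x * x)" using a(1) v assms by simp
  also have "(\<Sum>x\<in>R. a x * x) = (\<Sum>x\<in>R. ?b x * x)" by (intro sum.cong) auto
  finally have "m = a v * v + (\<Sum>x\<in>R. ?b x * x)" .
  define c where "c = a v"
  have vm: "v \<in> {w::nat. lo \<le> real (c * w + (\<Sum>x\<in>R. ?b x * x)) \<and> real (c * w + (\<Sum>x\<in>R. ?b x * x)) \<le> hi}"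
    using m(2,3) \<open>m = a v * v + (\<Sum>x\<in>R. ?b x * x)\<close> unfolding c_def by simp
  have av: "(c, ?b) \<in> {1..s} \<times> (R \<rightarrow>\<^sub>E {1..s})" using a(2) ale b unfolding c_def by auto
  show "v \<in> (\<Union>(a,b)\<in>{1..s} \<times> (R \<rightarrow>\<^sub>E {1..s}).
           {v::nat. lo \<le> real (a * v + (\<Sum>x\<in>R. b x * x)) \<and> real (a * v + (\<Sum>x\<in>R. b x * x)) \<le> hi})"
    apply (rule UN_I[OF av])
    unfolding prod.case by (rule vm)
qed

lemma win_finite_card:
  assumes "finite R" "lo \<le> hi"
  shows "finite (win lo hi R)" "real (card (win lo hi R)) \<le> real s ^ (card R + 1) * (hi - lo + 1)"
proof -
  let ?I = "{1..s} \<times> (R \<rightarrow>\<^sub>E {1..s})"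
  let ?A = "\<lambda>(a,b). {v::nat. lo \<le> real (a * v + (\<Sum>x\<in>R. b x * x)) \<and> real (a * v + (\<Sum>x\<in>R. b x * x)) \<le> hi}"
  have fI: "finite ?I" using assms by (auto intro!: finite_PiE)
  have cA: "real (card (?A ab)) \<le> hi - lo + 1" if "ab \<in> ?I" for ab
  proof -
    obtain a b where ab: "ab = (a,b)" by force
    have "a \<ge> 1" using that ab by auto
    thus ?thesis using card_lin_interval[OF assms(2) \<open>a \<ge> 1\<close>, of "\<Sum>x\<in>R. b x * x"] ab by simp
  qed
  have finA: "finite (?A ab)" if "ab \<in> ?I" for ab
  proof -
    obtain a b where ab: "ab = (a,b)" by force
    have "?A ab \<subseteq> {..nat \<lfloor>hi\<rfloor>}"
    proof
      fix v assume "v \<in> ?A ab"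
      hence h1: "real (a * v + (\<Sum>x\<in>R. b x * x)) \<le> hi" using ab by simp
      have "a \<ge> 1" using that ab by auto
      hence "v \<le> a * v + (\<Sum>x\<in>R. b x * x)" by (metis le_add1 mult_1 mult_le_mono1 order_trans)
      hence "real v \<le> hi" using h1 by (meson of_nat_le_iff order_trans)
      thus "v \<in> {..nat \<lfloor>hi\<rfloor>}" by (simp add: le_nat_floor)
    qed
    thus ?thesis using finite_subset by blast
  qed
  have fU: "finite (\<Union>ab\<in>?I. ?A ab)" using fI finA by (intro finite_UN_I)
  show "finite (win lo hi R)" by (rule finite_subset[OF win_sub[OF assms(1)] fU])
  have "card (win lo hi R) \<le> card (\<Union>ab\<in>?I. ?A ab)"
    by (rule card_mono[OF fU win_sub[OF assms(1)]])
  also have "\<dots> \<le> (\<Sum>ab\<in>?I. card (?A ab))" using card_UN_le[OF fI] by blast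
  finally have c1: "card (win lo hi R) \<le> (\<Sum>ab\<in>?I. card (?A ab))" .
  have "real (card (win lo hi R)) \<le> real (\<Sum>ab\<in>?I. card (?A ab))"
    using c1 by (simp only: of_nat_le_iff)
  also have "\<dots> = (\<Sum>ab\<in>?I. real (card (?A ab)))" by (rule of_nat_sum)
  also have "\<dots> \<le> (\<Sum>ab\<in>?I. hi - lo + 1)" using cA by (intro sum_mono) auto
  also have "\<dots> = real (card ?I) * (hi - lo + 1)" by (rule sum_constant)
  also have "\<dots> = real s ^ (card R + 1) * (hi - lo + 1)"
  proof -
    have "card ?I = card {1..s} * card (R \<rightarrow>\<^sub>E {1..s})" by (rule card_cartesian_product)
    also have "card (R \<rightarrow>\<^sub>E {1..s}) = (\<Prod>x\<in>R. card {1..s})" using assms(1) by (rule card_PiE)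
    also have "\<dots> = s ^ card R" by simp
    finally have "card ?I = s * s ^ card R" by simp
    thus ?thesis by simp
  qed
  finally show "real (card (win lo hi R)) \<le> real s ^ (card R + 1) * (hi - lo + 1)" .
qed

lemma win_sum:
  assumes "finite R" "lo \<le> hi" "0 < t" "V \<subseteq> win lo hi R \<inter> {v. t \<le> real v}"
  shows "(\<Sum>v\<in>V. incl_prob s v) \<le> real s ^ card R * (hi - lo + 1) * t powr (bt - 1)"
proof -
  have fV: "finite V" using win_finite_card(1)[OF assms(1,2)] assms(4) finite_subset by blast
  have "(\<Sum>v\<in>V. incl_prob s v) \<le> real (card V) * ((1 / real s) * t powr (bt - 1))"
    using assms(3,4) by (intro sum_bounded_above p_le) auto
  also have "\<dots> \<le> (real s ^ (card R + 1) * (hi - lo + 1)) * ((1 / real s) * t powr (bt - 1))"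
  proof (intro mult_right_mono)
    have "card V \<le> card (win lo hi R)" using win_finite_card(1)[OF assms(1,2)] assms(4) by (intro card_mono) auto
    thus "real (card V) \<le> real s ^ (card R + 1) * (hi - lo + 1)"
      using win_finite_card(2)[OF assms(1,2)] by (meson of_nat_le_iff order_trans)
  qed (use s2 in auto)
  also have "\<dots> = real s ^ card R * (hi - lo + 1) * t powr (bt - 1)" using s2 by (simp add: field_simps)
  finally show ?thesis .
qed

end


context ctx begin

lemma sigma_props:
  assumes "m \<in> sigma_set s \<omega>" "finite \<omega>" "\<omega> \<subseteq> {1..}"
  shows "card \<omega> \<le> s" "\<omega> \<noteq> {}" "\<And>x. x \<in> \<omega> \<Longrightarrow> x \<le> m" "m \<le> s * Max \<omega>"
proof -
  obtain a where a: "m = (\<Sum>x\<in>\<omega>. a x * x)" "\<forall>x\<in>\<omega>. 1 \<le> a x" "(\<Sum>x\<in>\<omega>. a x) = s"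
    using assms(1) unfolding sigma_set_def by auto
  have "card \<omega> = (\<Sum>x\<in>\<omega>. 1)" by simp
  also have "\<dots> \<le> (\<Sum>x\<in>\<omega>. a x)" using a(2) by (intro sum_mono) auto
  finally show "card \<omega> \<le> s" using a(3) by simp
  show ne: "\<omega> \<noteq> {}" using a(3) s2 by auto
  show "x \<le> m" if "x \<in> \<omega>" for x
  proof -
    have "x \<le> a x * x" using a(2) that by simp
    also have "\<dots> \<le> m" unfolding a(1) using member_le_sum[OF that _ assms(2), of "\<lambda>x. a x * x"] by simp
    finally show ?thesis .
  qed
  have "m \<le> (\<Sum>x\<in>\<omega>. a x * Max \<omega>)" unfolding a(1) using assms(2) by (intro sum_mono mult_left_mono) auto
  also have "\<dots> = s * Max \<omega>" using a(3) by (simp add: sum_distrib_right[symmetric])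
  finally show "m \<le> s * Max \<omega>" .
qed

lemma Om_props:
  assumes "\<omega> \<in> Omega_I s lo hi"
  shows "finite \<omega>" "\<omega> \<subseteq> {1..}" "card \<omega> \<le> s" "\<omega> \<noteq> {}" "\<And>x. x \<in> \<omega> \<Longrightarrow> real x \<le> hi"
        "lo \<le> real s * real (Max \<omega>)"
proof -
  obtain m where m: "m \<in> sigma_set s \<omega>" "lo \<le> real m" "real m \<le> hi" and f: "finite \<omega>" "\<omega> \<subseteq> {1..}"
    using assms unfolding Omega_I_def by auto
  show "finite \<omega>" "\<omega> \<subseteq> {1..}" by fact+
  show "card \<omega> \<le> s" "\<omega> \<noteq> {}" using sigma_props[OF m(1) f] by auto
  show "real x \<le> hi" if "x \<in> \<omega>" for x
    using sigma_props(3)[OF m(1) f that] m(3) by (meson of_nat_le_iff order_trans)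
  have "real m \<le> real (s * Max \<omega>)" using sigma_props(4)[OF m(1) f] by (simp only: of_nat_le_iff)
  thus "lo \<le> real s * real (Max \<omega>)" using m(2) by simp
qed

lemma Om_in_win:
  assumes "\<omega> \<in> Omega_I s lo hi" "v \<in> \<omega>"
  shows "v \<in> win lo hi (\<omega> - {v})"
proof -
  obtain m where m: "m \<in> sigma_set s \<omega>" "lo \<le> real m" "real m \<le> hi"
    using assms unfolding Omega_I_def by auto
  have "insert v (\<omega> - {v}) = \<omega>" using assms(2) by auto
  thus ?thesis unfolding win_def using m by auto
qed

lemma Om_Max_ge:
  assumes "\<omega> \<in> Omega_I s lo hi"
  shows "lo / real s \<le> real (Max \<omega>)"
  using Om_props(6)[OF assms] s2 by (simp add: field_simps)

lemma Om_sub: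
  assumes "\<omega> \<in> Omega_I s lo hi" "hi \<le> real N"
  shows "\<omega> \<subseteq> {1..N}"
proof
  fix x assume "x \<in> \<omega>"
  hence "x \<ge> 1" "real x \<le> hi" using Om_props(2,5)[OF assms(1)] by auto
  thus "x \<in> {1..N}" using assms(2) by simp
qed

lemma Om_sum:
  assumes "1 \<le> N" "hi \<le> real N" "lo \<le> hi" "0 < lo"
  shows "(\<Sum>\<omega>\<in>Omega_I s lo hi. prod (incl_prob s) \<omega>)
     \<le> real s * real N powr (real (s-1) * bt) * (real s ^ (s-1) * (hi - lo + 1) * (lo / real s) powr (bt - 1))"
proof -
  let ?RR = "{R. R \<subseteq> {1..N} \<and> card R \<le> s - 1}"
  let ?V = "\<lambda>R. win lo hi R \<inter> {v. lo / real s \<le> real v}"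
  let ?K = "real s ^ (s-1) * (hi - lo + 1) * (lo / real s) powr (bt - 1)"
  have fRR: "finite ?RR" by (rule finite_subset[of _ "Pow {1..N}"]) auto
  have fV: "finite (?V R)" if "R \<in> ?RR" for R
  proof -
    have "finite R" using that finite_subset by auto
    hence "finite (win lo hi R)" using win_finite_card(1) assms(3) by blast
    thus ?thesis by blast
  qed
  have "(\<Sum>\<omega>\<in>Omega_I s lo hi. prod (incl_prob s) \<omega>) \<le> (\<Sum>(R,v)\<in>Sigma ?RR ?V. prod (incl_prob s) R * incl_prob s v)"
  proof (rule sum_inj_le[where \<phi>="\<lambda>\<omega>. (\<omega> - {Max \<omega>}, Max \<omega>)"])
    show "finite (Sigma ?RR ?V)" by (rule finite_SigmaI[OF fRR fV])
    show "inj_on (\<lambda>\<omega>. (\<omega> - {Max \<omega>}, Max \<omega>)) (Omega_I s lo hi)"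
    proof (rule inj_onI)
      fix B C assume B: "B \<in> Omega_I s lo hi" and C: "C \<in> Omega_I s lo hi"
        and e: "(B - {Max B}, Max B) = (C - {Max C}, Max C)"
      have mB: "Max B \<in> B" using Om_props(1,4)[OF B] by auto
      have mC: "Max C \<in> C" using Om_props(1,4)[OF C] by auto
      have e1: "B - {Max B} = C - {Max C}" and e2: "Max B = Max C" using e by auto
      have "B = insert (Max B) (B - {Max B})" using mB by auto
      also have "\<dots> = insert (Max C) (C - {Max C})" using e1 e2 by simp
      also have "\<dots> = C" using mC by auto
      finally show "B = C" .
    qed
    show "(\<lambda>\<omega>. (\<omega> - {Max \<omega>}, Max \<omega>)) ` Omega_I s lo hi \<subseteq> Sigma ?RR ?V"
    proof
      fix y assume "y \<in> (\<lambda>\<omega>. (\<omega> - {Max \<omega>}, Max \<omega>)) ` Omega_I s lo hi"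
      then obtain \<omega> where w: "\<omega> \<in> Omega_I s lo hi" and y: "y = (\<omega> - {Max \<omega>}, Max \<omega>)" by auto
      have mx: "Max \<omega> \<in> \<omega>" using Om_props(1,4)[OF w] by auto
      have s1: "\<omega> - {Max \<omega>} \<subseteq> {1..N}" using Om_sub[OF w assms(2)] by blast
      have "card (\<omega> - {Max \<omega>}) = card \<omega> - 1" using mx Om_props(1)[OF w] by (simp add: card_Diff_singleton)
      hence s3: "card (\<omega> - {Max \<omega>}) \<le> s - 1" using Om_props(3)[OF w] by simp
      have v1: "Max \<omega> \<in> win lo hi (\<omega> - {Max \<omega>})" using Om_in_win[OF w mx] .
      have v2: "lo / real s \<le> real (Max \<omega>)" using Om_Max_ge[OF w] .
      show "y \<in> Sigma ?RR ?V" unfolding y using s1 s3 v1 v2 by blast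
    qed
    show "prod (incl_prob s) \<omega> \<le> (case (\<omega> - {Max \<omega>}, Max \<omega>) of (R, v) \<Rightarrow> prod (incl_prob s) R * incl_prob s v)"
      if "\<omega> \<in> Omega_I s lo hi" for \<omega>
    proof -
      have m1: "Max \<omega> \<in> \<omega>" and f1: "finite \<omega>" using Om_props(1,4)[OF that] by auto
      have "prod (incl_prob s) \<omega> = incl_prob s (Max \<omega>) * prod (incl_prob s) (\<omega> - {Max \<omega>})"
        by (rule prod.remove[OF f1 m1])
      thus ?thesis by simp
    qed
    show "0 \<le> (case b of (R, v) \<Rightarrow> prod (incl_prob s) R * incl_prob s v)" for b
      by (auto simp: p_nonneg prod_nonneg split: prod.splits)
  qed
  also have "\<dots> = (\<Sum>R\<in>?RR. \<Sum>v\<in>?V R. prod (incl_prob s) R * incl_prob s v)"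
    by (rule sum.Sigma[symmetric, OF fRR]) (use fV in blast)
  also have "\<dots> = (\<Sum>R\<in>?RR. prod (incl_prob s) R * (\<Sum>v\<in>?V R. incl_prob s v))"
    by (simp only: sum_distrib_left)
  also have "\<dots> \<le> (\<Sum>R\<in>?RR. prod (incl_prob s) R * ?K)"
  proof (intro sum_mono mult_left_mono)
    fix R assume R: "R \<in> ?RR"
    have fR: "finite R" using R finite_subset by auto
    have "(\<Sum>v\<in>?V R. incl_prob s v) \<le> real s ^ card R * (hi - lo + 1) * (lo / real s) powr (bt - 1)"
      using assms s2 by (intro win_sum[OF fR]) auto
    also have "\<dots> \<le> ?K"
    proof (intro mult_right_mono)
      show "real s ^ card R \<le> real s ^ (s - 1)" using R s2 by (intro power_increasing) auto
    qed (use assms in auto)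
    finally show "(\<Sum>v\<in>?V R. incl_prob s v) \<le> ?K" .
    show "0 \<le> prod (incl_prob s) R" by (auto simp: p_nonneg prod_nonneg)
  qed
  also have "\<dots> = (\<Sum>R\<in>?RR. prod (incl_prob s) R) * ?K" by (simp add: sum_distrib_right)
  also have "\<dots> \<le> (real (s-1+1) * real N powr (real (s-1) * bt)) * ?K"
  proof (intro mult_right_mono free_N[OF assms(1)])
    show "0 \<le> ?K" using assms by auto
  qed
  also have "\<dots> = real s * real N powr (real (s-1) * bt) * ?K" using s2 by simp
  finally show ?thesis by (simp only: mult.assoc)
qed

end


lemma sum_Sigma_le:
  fixes g :: "'a \<times> 'b \<Rightarrow> real"
  assumes "finite A" "\<And>a. a \<in> A \<Longrightarrow> finite (B a)" "\<And>a. a \<in> A \<Longrightarrow> (\<Sum>b\<in>B a. g (a,b)) \<le> h a"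
  shows "sum g (Sigma A B) \<le> sum h A"
proof -
  have "(\<Sum>a\<in>A. \<Sum>b\<in>B a. g (a,b)) = (\<Sum>(a,b)\<in>Sigma A B. g (a,b))"
    using assms(2) by (intro sum.Sigma[OF assms(1)]) blast
  hence "sum g (Sigma A B) = (\<Sum>a\<in>A. \<Sum>b\<in>B a. g (a,b))" by simp
  also have "\<dots> \<le> sum h A" using assms(3) by (intro sum_mono) auto
  finally show ?thesis .
qed

context ctx begin

lemma Om_finite: assumes "hi \<le> real N" shows "finite (Omega_I s lo hi)"
proof -
  have "Omega_I s lo hi \<subseteq> Pow {1..N}" using Om_sub[OF _ assms] by blast
  thus ?thesis by (rule finite_subset) simp
qed

lemma f_nonneg: "0 \<le> prod (incl_prob s) A" by (rule prod_nonneg) (simp add: p_nonneg)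

lemma caseA:
  assumes N1: "1 \<le> N'" and hiN: "hi' \<le> real N'" and lh: "lo' \<le> hi'" and lo0: "0 < lo'" and hiN0: "hi \<le> real N"
  shows "(\<Sum>(\<omega>,\<omega>')\<in>{(\<omega>,\<omega>'). \<omega> \<in> Omega_I s lo hi \<and> \<omega>' \<in> Omega_I s lo' hi' \<and> related \<omega> \<omega>' \<and> Max (\<omega> \<union> \<omega>') \<notin> \<omega>}.
            prod (incl_prob s) (\<omega> \<union> \<omega>'))
     \<le> (\<Sum>\<omega>\<in>Omega_I s lo hi. prod (incl_prob s) \<omega>) *
        (2 ^ s * (real (s-2+1) * real N' powr (real (s-2) * bt)) *
         (real s ^ (2 * s) * (hi' - lo' + 1) * (lo' / real s) powr (bt - 1)))"
proof -
  let ?Om = "Omega_I s lo hi"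
  let ?YY = "{Y. Y \<subseteq> {1..N'} \<and> card Y \<le> s - 2}"
  let ?V = "\<lambda>(T,Y). win lo' hi' (T \<union> Y) \<inter> {v. lo' / real s \<le> real v}"
  let ?B = "\<lambda>\<omega>. Sigma (Pow \<omega> \<times> ?YY) ?V"
  let ?K = "real s ^ (2 * s) * (hi' - lo' + 1) * (lo' / real s) powr (bt - 1)"
  let ?g = "\<lambda>(\<omega>, ((T,Y), w)). prod (incl_prob s) \<omega> * prod (incl_prob s) Y * incl_prob s w"
  let ?phi = "\<lambda>(\<omega>,\<omega>'::nat set). (\<omega>, ((\<omega>' - {Max \<omega>'}) \<inter> \<omega>, (\<omega>' - {Max \<omega>'}) - \<omega>), Max \<omega>')"
  have fOm: "finite ?Om" by (rule Om_finite[OF hiN0])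
  have fYY: "finite ?YY" by (rule finite_subset[of _ "Pow {1..N'}"]) auto
  have fPY: "finite (Pow \<omega> \<times> ?YY)" if "\<omega> \<in> ?Om" for \<omega>
    using Om_props(1)[OF that] fYY by auto
  have fV: "finite (?V TY)" if "TY \<in> Pow \<omega> \<times> ?YY" "\<omega> \<in> ?Om" for TY \<omega>
  proof -
    obtain T Y where TY: "TY = (T,Y)" by force
    have "finite (T \<union> Y)" using that TY Om_props(1)[OF that(2)] finite_subset by auto
    hence "finite (win lo' hi' (T \<union> Y))" using win_finite_card(1) lh by blast
    thus ?thesis using TY by auto
  qed
  have fB: "finite (?B \<omega>)" if "\<omega> \<in> ?Om" for \<omega>
    by (rule finite_SigmaI[OF fPY[OF that]]) (use fV that in blast)
  have step1: "(\<Sum>(\<omega>,\<omega>')\<in>{(\<omega>,\<omega>'). \<omega> \<in> ?Om \<and> \<omega>' \<in> Omega_I s lo' hi' \<and> related \<omega> \<omega>' \<and> Max (\<omega> \<union> \<omega>') \<notin> \<omega>}.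
            prod (incl_prob s) (\<omega> \<union> \<omega>')) \<le> sum ?g (Sigma ?Om ?B)"
  proof (rule sum_inj_le[where \<phi>="?phi"])
    show "finite (Sigma ?Om ?B)" by (rule finite_SigmaI[OF fOm fB])
    show "inj_on ?phi {(\<omega>,\<omega>'). \<omega> \<in> ?Om \<and> \<omega>' \<in> Omega_I s lo' hi' \<and> related \<omega> \<omega>' \<and> Max (\<omega> \<union> \<omega>') \<notin> \<omega>}"
    proof (rule inj_onI)
      fix p1 p2 assume P1: "p1 \<in> {(\<omega>,\<omega>'). \<omega> \<in> ?Om \<and> \<omega>' \<in> Omega_I s lo' hi' \<and> related \<omega> \<omega>' \<and> Max (\<omega> \<union> \<omega>') \<notin> \<omega>}"
        and P2: "p2 \<in> {(\<omega>,\<omega>'). \<omega> \<in> ?Om \<and> \<omega>' \<in> Omega_I s lo' hi' \<and> related \<omega> \<omega>' \<and> Max (\<omega> \<union> \<omega>') \<notin> \<omega>}"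
        and e': "?phi p1 = ?phi p2"
      obtain a b where p1: "p1 = (a,b)" by force
      obtain c d where p2: "p2 = (c,d)" by force
      have B: "b \<in> Omega_I s lo' hi'" using P1 p1 by auto
      have D: "d \<in> Omega_I s lo' hi'" using P2 p2 by auto
      from e' have e: "?phi (a,b) = ?phi (c,d)" unfolding p1 p2 .
      have mB: "Max b \<in> b" using Om_props(1,4)[OF B] by auto
      have mD: "Max d \<in> d" using Om_props(1,4)[OF D] by auto
      have ee: "a = c \<and> ((b - {Max b}) \<inter> a = (d - {Max d}) \<inter> c \<and> (b - {Max b}) - a = (d - {Max d}) - c) \<and> Max b = Max d"
        using e unfolding prod.case prod.inject .
      have e0: "a = c" and e1: "(b - {Max b}) \<inter> a = (d - {Max d}) \<inter> c" and e2: "(b - {Max b}) - a = (d - {Max d}) - c"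
        and e3: "Max b = Max d" using ee by blast+
      have "b - {Max b} = ((b - {Max b}) \<inter> a) \<union> ((b - {Max b}) - a)" by blast
      also have "\<dots> = ((d - {Max d}) \<inter> c) \<union> ((d - {Max d}) - c)" using e1 e2 by simp
      also have "\<dots> = d - {Max d}" by blast
      finally have e4: "b - {Max b} = d - {Max d}" .
      have "b = insert (Max b) (b - {Max b})" using mB by auto
      also have "\<dots> = insert (Max d) (d - {Max d})" using e3 e4 by simp
      also have "\<dots> = d" using mD by auto
      finally show "p1 = p2" using e0 p1 p2 by simp
    qed
    show "?phi ` {(\<omega>,\<omega>'). \<omega> \<in> ?Om \<and> \<omega>' \<in> Omega_I s lo' hi' \<and> related \<omega> \<omega>' \<and> Max (\<omega> \<union> \<omega>') \<notin> \<omega>} \<subseteq> Sigma ?Om ?B"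
    proof (rule image_subsetI)
      fix p assume P: "p \<in> {(\<omega>,\<omega>'). \<omega> \<in> ?Om \<and> \<omega>' \<in> Omega_I s lo' hi' \<and> related \<omega> \<omega>' \<and> Max (\<omega> \<union> \<omega>') \<notin> \<omega>}"
      obtain \<omega> \<omega>' where p: "p = (\<omega>, \<omega>')" by force
      have w: "\<omega> \<in> ?Om" and w': "\<omega>' \<in> Omega_I s lo' hi'" and r: "related \<omega> \<omega>'"
        and mx: "Max (\<omega> \<union> \<omega>') \<notin> \<omega>" using P p by auto
      have fw: "finite \<omega>" "\<omega> \<noteq> {}" using Om_props(1,4)[OF w] by auto
      have fw': "finite \<omega>'" "\<omega>' \<noteq> {}" using Om_props(1,4)[OF w'] by auto
      define z where "z = Max (\<omega> \<union> \<omega>')"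
      have z1: "z \<in> \<omega> \<union> \<omega>'" unfolding z_def using fw fw' by (intro Max_in) auto
      hence zw': "z \<in> \<omega>'" using mx unfolding z_def by auto
      have "Max \<omega>' \<le> z" unfolding z_def using fw fw' by (intro Max_mono) auto
      moreover have "z \<le> Max \<omega>'" using zw' fw' by simp
      ultimately have zM: "Max \<omega>' = z" by simp
      define Q where "Q = \<omega>' - {Max \<omega>'}"
      have wQ: "\<omega>' = insert (Max \<omega>') Q" unfolding Q_def using zw' zM by auto
      have Mw: "Max \<omega>' \<notin> \<omega>" using mx zM z_def by simp
      have T0: "Q \<inter> \<omega> \<noteq> {}" using r Mw unfolding related_def Q_def by auto
      have c1: "card \<omega>' \<ge> 1" using fw' by (simp add: Suc_leI card_gt_0_iff)
      have "card Q = card \<omega>' - 1" unfolding Q_def using zw' zM fw' by (simp add: card_Diff_singleton)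
      hence cw': "card \<omega>' = card Q + 1" using c1 by linarith
      have cQ: "card Q = card (Q \<inter> \<omega>) + card (Q - \<omega>)"
        using fw' unfolding Q_def by (metis card_Int_Diff finite_Diff)
      have "card (Q \<inter> \<omega>) \<ge> 1" using T0 fw' unfolding Q_def
        by (metis One_nat_def Suc_leI card_gt_0_iff finite_Diff finite_Int)
      hence cY: "card (Q - \<omega>) \<le> s - 2" using cw' cQ Om_props(3)[OF w'] by linarith
      have Ysub: "Q - \<omega> \<subseteq> {1..N'}" using Om_sub[OF w' hiN] unfolding Q_def by blast
      have TU: "(Q \<inter> \<omega>) \<union> (Q - \<omega>) = Q" by blast
      have v0: "Max \<omega>' \<in> win lo' hi' (\<omega>' - {Max \<omega>'})" by (rule Om_in_win[OF w']) (use zw' zM in simp)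
      have v1: "Max \<omega>' \<in> win lo' hi' ((Q \<inter> \<omega>) \<union> (Q - \<omega>))" unfolding TU unfolding Q_def by (rule v0)
      have v2: "lo' / real s \<le> real (Max \<omega>')" by (rule Om_Max_ge[OF w'])
      have pe: "?phi (\<omega>,\<omega>') = (\<omega>, ((Q \<inter> \<omega>, Q - \<omega>), Max \<omega>'))" unfolding Q_def by simp
      have m1: "(Q \<inter> \<omega>, Q - \<omega>) \<in> Pow \<omega> \<times> ?YY" using cY Ysub by blast
      have m2: "Max \<omega>' \<in> ?V (Q \<inter> \<omega>, Q - \<omega>)" using v1 v2 by simp
      have "((Q \<inter> \<omega>, Q - \<omega>), Max \<omega>') \<in> ?B \<omega>" using m1 m2 by (rule SigmaI)
      hence "?phi (\<omega>,\<omega>') \<in> Sigma ?Om ?B" unfolding pe using w by (rule SigmaI[rotated])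
      thus "?phi p \<in> Sigma ?Om ?B" using p by simp
    qed
    show "(case p of (\<omega>,\<omega>') \<Rightarrow> prod (incl_prob s) (\<omega> \<union> \<omega>')) \<le> ?g (?phi p)"
      if "p \<in> {(\<omega>,\<omega>'). \<omega> \<in> ?Om \<and> \<omega>' \<in> Omega_I s lo' hi' \<and> related \<omega> \<omega>' \<and> Max (\<omega> \<union> \<omega>') \<notin> \<omega>}" for p
    proof -
      obtain \<omega> \<omega>' where p: "p = (\<omega>,\<omega>')" by force
      have w: "\<omega> \<in> ?Om" and w': "\<omega>' \<in> Omega_I s lo' hi'" and mx: "Max (\<omega> \<union> \<omega>') \<notin> \<omega>"
        using that p by auto
      have fw: "finite \<omega>" "\<omega> \<noteq> {}" using Om_props(1,4)[OF w] by auto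
      have fw': "finite \<omega>'" "\<omega>' \<noteq> {}" using Om_props(1,4)[OF w'] by auto
      define z where "z = Max (\<omega> \<union> \<omega>')"
      have z1: "z \<in> \<omega> \<union> \<omega>'" unfolding z_def using fw fw' by (intro Max_in) auto
      hence zw': "z \<in> \<omega>'" using mx unfolding z_def by auto
      have "Max \<omega>' \<le> z" unfolding z_def using fw fw' by (intro Max_mono) auto
      moreover have "z \<le> Max \<omega>'" using zw' fw' by simp
      ultimately have zM: "Max \<omega>' = z" by simp
      have Mw: "Max \<omega>' \<notin> \<omega>" using mx zM z_def by simp
      define Y where "Y = (\<omega>' - {Max \<omega>'}) - \<omega>"
      have U: "\<omega> \<union> \<omega>' = \<omega> \<union> insert (Max \<omega>') Y" unfolding Y_def using zw' zM by auto
      have fY: "finite Y" unfolding Y_def using fw' by simp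
      have MY: "Max \<omega>' \<notin> Y" unfolding Y_def by simp
      have dj: "\<omega> \<inter> insert (Max \<omega>') Y = {}" unfolding Y_def using Mw by auto
      have "prod (incl_prob s) (\<omega> \<union> \<omega>') = prod (incl_prob s) \<omega> * prod (incl_prob s) (insert (Max \<omega>') Y)"
        unfolding U by (rule prod.union_disjoint) (use fw fY dj in auto)
      also have "prod (incl_prob s) (insert (Max \<omega>') Y) = incl_prob s (Max \<omega>') * prod (incl_prob s) Y"
        by (rule prod.insert[OF fY MY])
      finally have "prod (incl_prob s) (\<omega> \<union> \<omega>') = prod (incl_prob s) \<omega> * prod (incl_prob s) Y * incl_prob s (Max \<omega>')"
        by (simp add: mult_ac)
      thus ?thesis using p Y_def by simp
    qed
    show "0 \<le> ?g b" for b by (auto simp: f_nonneg p_nonneg split: prod.splits)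
  qed
  have step2: "sum ?g (Sigma ?Om ?B) \<le> (\<Sum>\<omega>\<in>?Om. prod (incl_prob s) \<omega> * (2 ^ s * (real (s-2+1) * real N' powr (real (s-2) * bt)) * ?K))"
  proof (rule sum_Sigma_le[OF fOm fB])
    fix \<omega> assume w: "\<omega> \<in> ?Om"
    let ?h = "\<lambda>(T::nat set, Y::nat set). prod (incl_prob s) \<omega> * prod (incl_prob s) Y * ?K"
    have "(\<Sum>b\<in>?B \<omega>. ?g (\<omega>, b)) = sum (\<lambda>(TY, w). prod (incl_prob s) \<omega> * prod (incl_prob s) (snd TY) * incl_prob s w) (?B \<omega>)"
      by (intro sum.cong) auto
    also have "\<dots> \<le> sum ?h (Pow \<omega> \<times> ?YY)"
    proof (rule sum_Sigma_le[OF fPY[OF w]])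
      show "finite (?V TY)" if "TY \<in> Pow \<omega> \<times> ?YY" for TY using fV[OF that w] .
      fix TY assume TY: "TY \<in> Pow \<omega> \<times> ?YY"
      obtain T Y where TYe: "TY = (T,Y)" by force
      have T: "T \<subseteq> \<omega>" and Y: "Y \<subseteq> {1..N'}" "card Y \<le> s - 2" using TY TYe by auto
      have fTY: "finite (T \<union> Y)" using T Y Om_props(1)[OF w] finite_subset by auto
      have cTY: "card (T \<union> Y) \<le> 2 * s"
      proof -
        have "card (T \<union> Y) \<le> card T + card Y" by (rule card_Un_le)
        also have "card T \<le> card \<omega>" using T Om_props(1)[OF w] by (rule card_mono[rotated])
        finally show ?thesis using Om_props(3)[OF w] Y(2) by linarith
      qed
      have "(\<Sum>v\<in>?V TY. incl_prob s v) \<le> real s ^ card (T \<union> Y) * (hi' - lo' + 1) * (lo' / real s) powr (bt - 1)"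
        using TYe lh lo0 s2 by (intro win_sum[OF fTY]) auto
      also have "\<dots> \<le> ?K"
      proof (intro mult_right_mono)
        show "real s ^ card (T \<union> Y) \<le> real s ^ (2 * s)" using cTY s2 by (intro power_increasing) auto
      qed (use lh in auto)
      finally have sv: "(\<Sum>v\<in>?V TY. incl_prob s v) \<le> ?K" .
      have "(\<Sum>v\<in>?V TY. (\<lambda>(TY, w). prod (incl_prob s) \<omega> * prod (incl_prob s) (snd TY) * incl_prob s w) (TY, v))
          = prod (incl_prob s) \<omega> * prod (incl_prob s) Y * (\<Sum>v\<in>?V TY. incl_prob s v)"
        using TYe by (simp add: sum_distrib_left)
      also have "\<dots> \<le> prod (incl_prob s) \<omega> * prod (incl_prob s) Y * ?K"
        using sv by (intro mult_left_mono) (auto simp: f_nonneg)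
      finally show "(\<Sum>v\<in>?V TY. (\<lambda>(TY, w). prod (incl_prob s) \<omega> * prod (incl_prob s) (snd TY) * incl_prob s w) (TY, v)) \<le> ?h TY"
        using TYe by simp
    qed
    also have "\<dots> = (\<Sum>T\<in>Pow \<omega>. \<Sum>Y\<in>?YY. prod (incl_prob s) \<omega> * prod (incl_prob s) Y * ?K)"
      by (rule sum.cartesian_product[symmetric])
    also have "\<dots> = real (card (Pow \<omega>)) * (prod (incl_prob s) \<omega> * (\<Sum>Y\<in>?YY. prod (incl_prob s) Y) * ?K)"
      by (simp add: sum_distrib_left sum_distrib_right mult_ac)
    also have "\<dots> \<le> 2 ^ s * (prod (incl_prob s) \<omega> * (real (s-2+1) * real N' powr (real (s-2) * bt)) * ?K)"
    proof (intro mult_mono)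
      have "card (Pow \<omega>) = 2 ^ card \<omega>" using Om_props(1)[OF w] by (rule card_Pow)
      hence "real (card (Pow \<omega>)) = 2 ^ card \<omega>" by simp
      also have "\<dots> \<le> 2 ^ s" using Om_props(3)[OF w] by (intro power_increasing) auto
      finally show "real (card (Pow \<omega>)) \<le> 2 ^ s" .
      show "(\<Sum>Y\<in>?YY. prod (incl_prob s) Y) \<le> real (s-2+1) * real N' powr (real (s-2) * bt)"
        by (rule free_N[OF N1])
    qed (use lh f_nonneg in \<open>auto intro!: sum_nonneg mult_nonneg_nonneg\<close>)
    finally show "(\<Sum>b\<in>?B \<omega>. ?g (\<omega>, b)) \<le> prod (incl_prob s) \<omega> * (2 ^ s * (real (s-2+1) * real N' powr (real (s-2) * bt)) * ?K)"
      by (simp add: mult_ac)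
  qed
  show ?thesis using step1 step2 by (simp add: sum_distrib_right)
qed

end


lemma free_le_w:
  fixes q :: "nat \<Rightarrow> real"
  assumes "finite S" "\<And>x. 0 \<le> q x" "\<And>h. 0 \<le> c h"
  shows "(\<Sum>A\<in>{A. A \<subseteq> S \<and> card A \<le> H}. prod q A * c (card A)) \<le> (\<Sum>h\<le>H. (sum q S) ^ h * c h)"
proof (induction H)
  case 0
  have "{A. A \<subseteq> S \<and> card A \<le> 0} = {A. A \<subseteq> S \<and> card A = 0}" by auto
  moreover have "(\<Sum>A\<in>{A. A \<subseteq> S \<and> card A = 0}. prod q A * c (card A)) = (\<Sum>A\<in>{A. A \<subseteq> S \<and> card A = 0}. prod q A) * c 0"
    by (simp add: sum_distrib_right)
  moreover have "(\<Sum>A\<in>{A. A \<subseteq> S \<and> card A = 0}. prod q A) * c 0 \<le> 1 * c 0"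
    using free_exact[where q=q and S=S and h=0, OF assms(1,2)] by (intro mult_right_mono assms(3)) simp
  ultimately show ?case by simp
next
  case (Suc H)
  have e: "{A. A \<subseteq> S \<and> card A \<le> Suc H} = {A. A \<subseteq> S \<and> card A \<le> H} \<union> {A. A \<subseteq> S \<and> card A = Suc H}"
    by auto
  have f: "finite {A. A \<subseteq> S \<and> card A \<le> H}" "finite {A. A \<subseteq> S \<and> card A = Suc H}"
    using assms(1) by (auto intro: finite_subset)
  have "(\<Sum>A\<in>{A. A \<subseteq> S \<and> card A \<le> Suc H}. prod q A * c (card A)) =
     (\<Sum>A\<in>{A. A \<subseteq> S \<and> card A \<le> H}. prod q A * c (card A)) + (\<Sum>A\<in>{A. A \<subseteq> S \<and> card A = Suc H}. prod q A * c (card A))"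
    unfolding e by (rule sum.union_disjoint[OF f]) auto
  also have "(\<Sum>A\<in>{A. A \<subseteq> S \<and> card A = Suc H}. prod q A * c (card A)) = (\<Sum>A\<in>{A. A \<subseteq> S \<and> card A = Suc H}. prod q A) * c (Suc H)"
    by (simp add: sum_distrib_right)
  also have "\<dots> \<le> (sum q S) ^ Suc H * c (Suc H)"
    using free_exact[where q=q and S=S and h="Suc H", OF assms(1,2)] assms(3) by (intro mult_right_mono) auto
  finally show ?case using Suc.IH by simp
qed

context ctx begin

lemma sum_upow:
  assumes "N \<ge> 1"
  shows "(\<Sum>u\<in>{1..N}. real u powr e) \<le> real N powr (max 0 (e + 1)) * (1 + ln (real N))"
proof -
  have "(\<Sum>u\<in>{1..N}. real u powr e) \<le> (\<Sum>u\<in>{1..N}. real N powr (max 0 (e + 1)) * (1 / real u))"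
  proof (intro sum_mono)
    fix u assume u: "u \<in> {1..N}"
    have u1: "real u \<ge> 1" "real u \<le> real N" using u by auto
    have "real u powr e = real u powr (e + 1) * (1 / real u)"
      using u1 by (simp add: powr_add powr_minus divide_simps)
    also have "real u powr (e + 1) \<le> real N powr (max 0 (e + 1))"
    proof (cases "e + 1 \<le> 0")
      case True
      have "real u powr (e + 1) \<le> 1 powr (e + 1)" using u1 True by (intro powr_mono2') auto
      hence "real u powr (e + 1) \<le> 1" by simp
      also have "1 \<le> real N powr (max 0 (e + 1))" using u1 by (intro ge_one_powr_ge_zero) auto
      finally show ?thesis .
    next
      case False
      hence "max 0 (e + 1) = e + 1" by simp
      thus ?thesis using u1 False by (simp add: powr_mono2)
    qed
    hence "real u powr (e + 1) * (1 / real u) \<le> real N powr (max 0 (e + 1)) * (1 / real u)"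
      using u1 by (intro mult_right_mono) auto
    finally show "real u powr e \<le> real N powr (max 0 (e + 1)) * (1 / real u)" .
  qed
  also have "\<dots> = real N powr (max 0 (e + 1)) * (\<Sum>u\<in>{1..N}. 1 / real u)" by (simp add: sum_distrib_left)
  also have "\<dots> \<le> real N powr (max 0 (e + 1)) * (1 + ln (real N))"
    using harm_le[OF assms] by (intro mult_left_mono) auto
  finally show ?thesis .
qed

lemma free_N0:
  "(\<Sum>A\<in>{A. A \<subseteq> {1..u} \<and> card A \<le> K}. prod (incl_prob s) A) \<le> real (K+1) * real u powr (real K * bt)"
  if "u \<ge> 1" using free_N[OF that] .

end


context ctx begin

definition WW :: "nat \<Rightarrow> (nat set \<times> nat) set" where
  "WW N = {(W,u). W \<subseteq> {1..N} \<and> card W \<le> 2 * s - 3 \<and>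
     ((u = 0 \<and> card W \<le> s - 2) \<or> (u \<in> W \<and> card {v\<in>W. u < v} \<le> s - 2))}"

definition wt :: "nat set \<times> nat \<Rightarrow> real" where
  "wt = (\<lambda>(W,u). prod (incl_prob s) W * (if u = 0 then 1 else real u powr (bt - 1)))"

lemma wt_nonneg: "0 \<le> wt x" unfolding wt_def by (auto simp: f_nonneg split: prod.splits)

lemma exp_arith:
  assumes "h \<le> s - 2"
  shows "real h * bt + max 0 ((real (2 * s - 4 - h) + 2) * bt - 1) \<le> 1 - 2 * bt"
proof -
  have r: "real (2 * s - 4 - h) = 2 * real s - 4 - real h" using assms s2 by (simp add: of_nat_diff)
  have "(real (2 * s - 4 - h) + 2) * bt - 1 = 1 - 2 * bt - real h * bt"
    unfolding r using s_bt by (simp add: algebra_simps)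
  moreover have "real h * bt \<le> 1 - 2 * bt"
  proof -
    have "real h \<le> real s - 2" using assms s2 by linarith
    hence "real h * bt \<le> (real s - 2) * bt" using bt_pos by (intro mult_right_mono) auto
    thus ?thesis using s_bt by (simp add: algebra_simps)
  qed
  ultimately show ?thesis by simp
qed

lemma Wsum0:
  assumes "N \<ge> 1"
  shows "(\<Sum>x\<in>{x\<in>WW N. snd x = 0}. wt x) \<le> real s * real N powr (1 - 2 * bt) * (1 + ln (real N))"
proof -
  have "(\<Sum>x\<in>{x\<in>WW N. snd x = 0}. wt x) \<le> (\<Sum>A\<in>{A. A \<subseteq> {1..N} \<and> card A \<le> s - 2}. prod (incl_prob s) A)"
  proof (rule sum_inj_le[where \<phi>=fst])
    show "finite {A. A \<subseteq> {1..N} \<and> card A \<le> s - 2}" by (rule finite_subset[of _ "Pow {1..N}"]) auto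
    show "inj_on fst {x \<in> WW N. snd x = 0}" by (intro inj_onI) (auto simp: prod_eq_iff)
    show "fst ` {x \<in> WW N. snd x = 0} \<subseteq> {A. A \<subseteq> {1..N} \<and> card A \<le> s - 2}"
      by (auto simp: WW_def)
    show "wt x \<le> prod (incl_prob s) (fst x)" if "x \<in> {x \<in> WW N. snd x = 0}" for x
      using that by (auto simp: wt_def split: prod.splits)
  qed (auto simp: f_nonneg)
  also have "\<dots> \<le> real (s - 2 + 1) * real N powr (real (s - 2) * bt)" by (rule free_N[OF assms])
  also have "real (s - 2) * bt = 1 - 2 * bt" using s2 s_bt by (simp add: of_nat_diff algebra_simps)
  also have "real (s - 2 + 1) * real N powr (1 - 2 * bt) \<le> real s * real N powr (1 - 2 * bt) * (1 + ln (real N))"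
  proof -
    have "real (s - 2 + 1) \<le> real s" using s2 by simp
    moreover have "1 \<le> 1 + ln (real N)" using assms by simp
    ultimately have "real (s - 2 + 1) * real N powr (1 - 2 * bt) \<le> real s * real N powr (1 - 2 * bt) * 1"
      by (simp add: mult_right_mono)
    also have "\<dots> \<le> real s * real N powr (1 - 2 * bt) * (1 + ln (real N))"
      using assms by (intro mult_left_mono) auto
    finally show ?thesis .
  qed
  finally show ?thesis .
qed

end


context ctx begin

lemma Wsum1:
  assumes N1: "N \<ge> 1"
  shows "(\<Sum>x\<in>{x\<in>WW N. snd x \<noteq> 0}. wt x) \<le> 2 * real s * real N powr (1 - 2 * bt) * (1 + ln (real N))"
proof -
  let ?AA = "{A::nat set. A \<subseteq> {1..N} \<and> card A \<le> s - 2}"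
  let ?BB = "\<lambda>(u::nat) (A::nat set). {B::nat set. B \<subseteq> {1..u} \<and> card B \<le> 2 * s - 4 - card A}"
  let ?T = "Sigma {1..N} (\<lambda>u. Sigma ?AA (?BB u))"
  let ?g = "\<lambda>(u, (A, B)). incl_prob s u * real u powr (bt - 1) * prod (incl_prob s) A * prod (incl_prob s) B"
  let ?phi = "\<lambda>(W::nat set, u::nat). (u, ({v\<in>W. u < v}, {v\<in>W. v < u}))"
  let ?L = "1 + ln (real N)"
  let ?c = "\<lambda>h. (1 / real s) * real (2 * s - 4 - h + 1) * (real N powr (max 0 ((real (2 * s - 4 - h) + 2) * bt - 1)) * ?L)"
  have fAA: "finite ?AA" by (rule finite_subset[of _ "Pow {1..N}"]) auto
  have fBB: "finite (?BB u A)" for u A by (rule finite_subset[of _ "Pow {1..u}"]) auto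
  have fIn: "finite (Sigma ?AA (?BB u))" for u by (rule finite_SigmaI[OF fAA fBB])
  have L0: "0 \<le> ?L" using N1 by simp
  have step1: "(\<Sum>x\<in>{x\<in>WW N. snd x \<noteq> 0}. wt x) \<le> sum ?g ?T"
  proof (rule sum_inj_le[where \<phi>="?phi"])
    show "finite ?T" by (rule finite_SigmaI) (auto intro: fIn)
    show "inj_on ?phi {x\<in>WW N. snd x \<noteq> 0}"
    proof (rule inj_onI)
      fix x y assume X: "x \<in> {x\<in>WW N. snd x \<noteq> 0}" and Y: "y \<in> {x\<in>WW N. snd x \<noteq> 0}" and e: "?phi x = ?phi y"
      obtain W u where x: "x = (W,u)" by force
      obtain W' u' where y: "y = (W',u')" by force
      have uW: "u \<in> W" using X x by (auto simp: WW_def)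
      have uW': "u' \<in> W'" using Y y by (auto simp: WW_def)
      have ee: "u = u' \<and> ({v\<in>W. u < v} = {v\<in>W'. u' < v} \<and> {v\<in>W. v < u} = {v\<in>W'. v < u'})"
        using e unfolding x y prod.case prod.inject .
      have dW: "W = {v\<in>W. u < v} \<union> {u} \<union> {v\<in>W. v < u}" using uW by auto
      have dW': "W' = {v\<in>W'. u' < v} \<union> {u'} \<union> {v\<in>W'. v < u'}" using uW' by auto
      have e1: "u = u'" and e2: "{v\<in>W. u < v} = {v\<in>W'. u' < v}" and e3: "{v\<in>W. v < u} = {v\<in>W'. v < u'}"
        using ee by blast+
      have "W = {v\<in>W. u < v} \<union> {u} \<union> {v\<in>W. v < u}" by (rule dW)
      also have "\<dots> = {v\<in>W'. u' < v} \<union> {u'} \<union> {v\<in>W'. v < u'}"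
        by (subst e2, subst e3, subst e1, rule refl)
      also have "\<dots> = W'" by (rule dW'[symmetric])
      finally have "W = W'" .
      thus "x = y" using x y e1 by simp
    qed
    show "?phi ` {x\<in>WW N. snd x \<noteq> 0} \<subseteq> ?T"
    proof (rule image_subsetI)
      fix x assume X: "x \<in> {x\<in>WW N. snd x \<noteq> 0}"
      obtain W u where x: "x = (W,u)" by force
      have W: "W \<subseteq> {1..N}" "card W \<le> 2 * s - 3" "u \<in> W" "card {v\<in>W. u < v} \<le> s - 2"
        using X x by (auto simp: WW_def)
      have fW: "finite W" using W(1) finite_subset by auto
      have u1: "u \<in> {1..N}" using W by auto
      have A1: "{v\<in>W. u < v} \<in> ?AA" using W by auto
      have dW: "W = insert u ({v\<in>W. u < v} \<union> {v\<in>W. v < u})" using W(3) by auto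
      have "card W = card ({v\<in>W. u < v} \<union> {v\<in>W. v < u}) + 1"
      proof -
        have "u \<notin> {v\<in>W. u < v} \<union> {v\<in>W. v < u}" by auto
        moreover have "finite ({v\<in>W. u < v} \<union> {v\<in>W. v < u})" using fW by auto
        ultimately show ?thesis by (subst dW) simp
      qed
      moreover have "card ({v\<in>W. u < v} \<union> {v\<in>W. v < u}) = card {v\<in>W. u < v} + card {v\<in>W. v < u}"
        using fW by (intro card_Un_disjoint) auto
      ultimately have "card {v\<in>W. v < u} \<le> 2 * s - 4 - card {v\<in>W. u < v}" using W(2) s2 by linarith
      moreover have "{v\<in>W. v < u} \<subseteq> {1..u}" using W(1) by auto
      ultimately have B1: "{v\<in>W. v < u} \<in> ?BB u {v\<in>W. u < v}" by simp
      show "?phi x \<in> ?T" unfolding x prod.case using u1 A1 B1 by blast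
    qed
    show "wt x \<le> ?g (?phi x)" if "x \<in> {x\<in>WW N. snd x \<noteq> 0}" for x
    proof -
      obtain W u where x: "x = (W,u)" by force
      have W: "W \<subseteq> {1..N}" "u \<in> W" "u \<noteq> 0" using that x by (auto simp: WW_def)
      have fW: "finite W" using W(1) finite_subset by auto
      have dW: "W = insert u ({v\<in>W. u < v} \<union> {v\<in>W. v < u})" using W(2) by auto
      have "prod (incl_prob s) W = incl_prob s u * prod (incl_prob s) ({v\<in>W. u < v} \<union> {v\<in>W. v < u})"
        by (subst dW, rule prod.insert) (use fW in auto)
      also have "prod (incl_prob s) ({v\<in>W. u < v} \<union> {v\<in>W. v < u}) = prod (incl_prob s) {v\<in>W. u < v} * prod (incl_prob s) {v\<in>W. v < u}"
        by (rule prod.union_disjoint) (use fW in auto)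
      finally show ?thesis unfolding x wt_def using W(3) by (simp add: mult_ac)
    qed
    show "0 \<le> ?g b" for b by (auto simp: f_nonneg p_nonneg split: prod.splits)
  qed
  have step2: "sum ?g ?T \<le> (\<Sum>u\<in>{1..N}. \<Sum>A\<in>?AA. prod (incl_prob s) A *
        (incl_prob s u * real u powr (bt - 1) * (real (2 * s - 4 - card A + 1) * real u powr (real (2 * s - 4 - card A) * bt))))"
  proof (rule sum_Sigma_le)
    fix u assume u: "u \<in> {1..N}"
    show "(\<Sum>b\<in>Sigma ?AA (?BB u). ?g (u, b)) \<le> (\<Sum>A\<in>?AA. prod (incl_prob s) A *
        (incl_prob s u * real u powr (bt - 1) * (real (2 * s - 4 - card A + 1) * real u powr (real (2 * s - 4 - card A) * bt))))"
    proof (rule sum_Sigma_le[OF fAA fBB])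
      fix A assume A: "A \<in> ?AA"
      have "(\<Sum>B\<in>?BB u A. ?g (u, (A, B))) = incl_prob s u * real u powr (bt - 1) * prod (incl_prob s) A * (\<Sum>B\<in>?BB u A. prod (incl_prob s) B)"
        by (simp add: sum_distrib_left)
      also have "\<dots> \<le> incl_prob s u * real u powr (bt - 1) * prod (incl_prob s) A * (real (2 * s - 4 - card A + 1) * real u powr (real (2 * s - 4 - card A) * bt))"
        using u by (intro mult_left_mono free_N0) (auto simp: f_nonneg p_nonneg)
      finally show "(\<Sum>B\<in>?BB u A. ?g (u, (A, B))) \<le> prod (incl_prob s) A *
        (incl_prob s u * real u powr (bt - 1) * (real (2 * s - 4 - card A + 1) * real u powr (real (2 * s - 4 - card A) * bt)))"
        by (simp add: mult_ac)
    qed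
  qed (auto intro: fIn)
  also have "\<dots> = (\<Sum>A\<in>?AA. prod (incl_prob s) A * (\<Sum>u\<in>{1..N}.
        incl_prob s u * real u powr (bt - 1) * (real (2 * s - 4 - card A + 1) * real u powr (real (2 * s - 4 - card A) * bt))))"
    by (subst sum.swap) (simp add: sum_distrib_left)
  also have "\<dots> \<le> (\<Sum>A\<in>?AA. prod (incl_prob s) A * ?c (card A))"
  proof (intro sum_mono mult_left_mono)
    fix A assume A: "A \<in> ?AA"
    define K where "K = 2 * s - 4 - card A"
    have "(\<Sum>u\<in>{1..N}. incl_prob s u * real u powr (bt - 1) * (real (K + 1) * real u powr (real K * bt)))
        \<le> (\<Sum>u\<in>{1..N}. (1 / real s) * real (K + 1) * real u powr ((real K + 2) * bt - 2))"
    proof (intro sum_mono)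
      fix u assume u: "u \<in> {1..N}"
      have u0: "real u > 0" using u by auto
      have "incl_prob s u \<le> (1 / real s) * real u powr (bt - 1)" using u0 by (intro p_le) auto
      hence "incl_prob s u * real u powr (bt - 1) * (real (K + 1) * real u powr (real K * bt))
          \<le> (1 / real s) * real u powr (bt - 1) * real u powr (bt - 1) * (real (K + 1) * real u powr (real K * bt))"
        by (intro mult_right_mono) auto
      also have "\<dots> = (1 / real s) * real (K + 1) * (real u powr (bt - 1) * real u powr (bt - 1) * real u powr (real K * bt))"
        by (simp add: mult_ac)
      also have "\<dots> = (1 / real s) * real (K + 1) * real u powr ((real K + 2) * bt - 2)"
      proof -
        have "real u powr (bt - 1) * real u powr (bt - 1) * real u powr (real K * bt) = real u powr ((real K + 2) * bt - 2)"
          using u0 by (simp add: powr_add[symmetric] algebra_simps)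
        thus ?thesis by simp
      qed
      finally show "incl_prob s u * real u powr (bt - 1) * (real (K + 1) * real u powr (real K * bt))
          \<le> (1 / real s) * real (K + 1) * real u powr ((real K + 2) * bt - 2)" .
    qed
    also have "\<dots> = (1 / real s) * real (K + 1) * (\<Sum>u\<in>{1..N}. real u powr ((real K + 2) * bt - 2))"
      by (simp add: sum_distrib_left)
    also have "\<dots> \<le> (1 / real s) * real (K + 1) * (real N powr (max 0 ((real K + 2) * bt - 2 + 1)) * ?L)"
      by (intro mult_left_mono sum_upow[OF N1]) auto
    finally show "(\<Sum>u\<in>{1..N}. incl_prob s u * real u powr (bt - 1) * (real (2 * s - 4 - card A + 1) * real u powr (real (2 * s - 4 - card A) * bt)))
        \<le> ?c (card A)" unfolding K_def by (simp add: algebra_simps)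
  qed (auto simp: f_nonneg)
  also have "\<dots> \<le> (\<Sum>h\<le>s-2. (sum (incl_prob s) {1..N}) ^ h * ?c h)"
    by (rule free_le_w) (use L0 in \<open>auto simp: p_nonneg\<close>)
  also have "\<dots> \<le> (\<Sum>h\<le>s-2. 2 * real N powr (1 - 2 * bt) * ?L)"
  proof (intro sum_mono)
    fix h assume h: "h \<in> {..s-2}"
    have "(sum (incl_prob s) {1..N}) ^ h \<le> (real N powr bt) ^ h"
      by (intro power_mono sum_p_le sum_nonneg) (auto simp: p_nonneg)
    also have "\<dots> = real N powr (real h * bt)" using N1 by (simp add: powr_realpow[symmetric] powr_powr mult.commute)
    finally have a1: "(sum (incl_prob s) {1..N}) ^ h \<le> real N powr (real h * bt)" .
    have a2: "(1 / real s) * real (2 * s - 4 - h + 1) \<le> 2"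
    proof -
      have "2 * s - 4 - h + 1 \<le> 2 * s" using s2 by arith
      hence "real (2 * s - 4 - h + 1) \<le> real (2 * s)" by (simp only: of_nat_le_iff)
      hence "real (2 * s - 4 - h + 1) \<le> 2 * real s" by simp
      thus ?thesis using s2 by (simp add: field_simps)
    qed
    have a3: "real N powr (real h * bt) * real N powr (max 0 ((real (2 * s - 4 - h) + 2) * bt - 1)) \<le> real N powr (1 - 2 * bt)"
      unfolding powr_add[symmetric] using N1 exp_arith[of h] h by (intro powr_mono) auto
    have "(sum (incl_prob s) {1..N}) ^ h * ?c h \<le> real N powr (real h * bt) * ?c h"
      using a1 L0 by (intro mult_right_mono) auto
    also have "\<dots> = ((1 / real s) * real (2 * s - 4 - h + 1)) * ((real N powr (real h * bt) * real N powr (max 0 ((real (2 * s - 4 - h) + 2) * bt - 1))) * ?L)"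
      by (simp add: mult_ac)
    also have "\<dots> \<le> 2 * (real N powr (1 - 2 * bt) * ?L)"
      using a2 a3 L0 by (intro mult_mono) auto
    finally show "(sum (incl_prob s) {1..N}) ^ h * ?c h \<le> 2 * real N powr (1 - 2 * bt) * ?L" by simp
  qed
  also have "\<dots> = real (s - 1) * (2 * real N powr (1 - 2 * bt) * ?L)" using s2 by simp
  also have "\<dots> \<le> real s * (2 * real N powr (1 - 2 * bt) * ?L)"
    using L0 by (intro mult_right_mono) auto
  finally show ?thesis using step1 by (simp add: mult_ac)
qed

lemma Wsum:
  assumes "N \<ge> 1"
  shows "sum wt (WW N) \<le> 3 * real s * real N powr (1 - 2 * bt) * (1 + ln (real N))"
proof -
  have fWW: "finite (WW N)"
    by (rule finite_subset[of _ "Pow {1..N} \<times> {0..N}"]) (auto simp: WW_def)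
  have u: "sum wt ({x\<in>WW N. snd x = 0} \<union> {x\<in>WW N. snd x \<noteq> 0}) = sum wt {x\<in>WW N. snd x = 0} + sum wt {x\<in>WW N. snd x \<noteq> 0}"
    by (rule sum.union_disjoint) (use fWW in auto)
  have e: "{x\<in>WW N. snd x = 0} \<union> {x\<in>WW N. snd x \<noteq> 0} = WW N" by auto
  have "sum wt (WW N) = sum wt {x\<in>WW N. snd x = 0} + sum wt {x\<in>WW N. snd x \<noteq> 0}"
    using u unfolding e .
  also have "\<dots> \<le> real s * real N powr (1 - 2 * bt) * (1 + ln (real N)) + 2 * real s * real N powr (1 - 2 * bt) * (1 + ln (real N))"
    by (intro add_mono Wsum0 Wsum1 assms)
  finally show ?thesis by (simp add: algebra_simps)
qed

end


context ctx begin

definition PB :: "real \<Rightarrow> real \<Rightarrow> real \<Rightarrow> real \<Rightarrow> nat \<Rightarrow> (nat set \<times> nat set) set" where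
  "PB lo hi lo' hi' N = {(\<omega>,\<omega>'). \<omega> \<in> Omega_I s lo hi \<and> \<omega>' \<in> Omega_I s lo' hi' \<and> related \<omega> \<omega>' \<and>
      \<omega> \<union> \<omega>' \<subseteq> {1..N} \<and> Max (\<omega> \<union> \<omega>') \<in> \<omega> \<and> Max (\<omega> \<union> \<omega>') \<in> \<omega>' \<and>
      Max ((\<omega> - \<omega>') \<union> (\<omega>' - \<omega>)) \<in> \<omega>'}"

definition bu :: "nat set \<Rightarrow> nat \<Rightarrow> nat" where
  "bu W w = (if {v\<in>W. v < w} = {} then 0 else Max {v\<in>W. v < w})"

lemma pb_facts:
  assumes P: "(\<omega>,\<omega>') \<in> PB lo hi lo' hi' N"
  defines "x \<equiv> Max (\<omega> \<union> \<omega>')" and "w \<equiv> Max ((\<omega> - \<omega>') \<union> (\<omega>' - \<omega>))"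
  defines "W \<equiv> (\<omega> \<union> \<omega>') - {x, w}"
  shows "x \<in> \<omega>" "x \<in> \<omega>'" "w \<in> \<omega>'" "w \<notin> \<omega>" "finite \<omega>" "finite \<omega>'"
    "(W, bu W w) \<in> WW N" "\<omega> - {x} \<subseteq> W" "\<omega>' - {x, w} \<subseteq> W"
    "x \<in> win lo hi (\<omega> - {x})" "lo / real s \<le> real x"
    "w \<in> win lo' hi' (insert x (\<omega>' - {x, w}))" "real (max 1 (bu W w)) \<le> real w"
    "\<omega> \<union> \<omega>' = insert x (insert w W)" "x \<notin> insert w W" "w \<notin> W" "finite W"
proof -
  have w1: "\<omega> \<in> Omega_I s lo hi" and w2: "\<omega>' \<in> Omega_I s lo' hi'" and r: "related \<omega> \<omega>'"
    and sub: "\<omega> \<union> \<omega>' \<subseteq> {1..N}" and x1: "x \<in> \<omega>" and x2: "x \<in> \<omega>'" and w3: "w \<in> \<omega>'"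
    using P unfolding PB_def x_def w_def by auto
  show "x \<in> \<omega>" "x \<in> \<omega>'" "w \<in> \<omega>'" by fact+
  have f1: "finite \<omega>" and f2: "finite \<omega>'" using Om_props(1) w1 w2 by auto
  show "finite \<omega>" "finite \<omega>'" by fact+
  have fD: "finite ((\<omega> - \<omega>') \<union> (\<omega>' - \<omega>))" using f1 f2 by simp
  have neD: "(\<omega> - \<omega>') \<union> (\<omega>' - \<omega>) \<noteq> {}" using r unfolding related_def by auto
  have wD: "w \<in> (\<omega> - \<omega>') \<union> (\<omega>' - \<omega>)" unfolding w_def using fD neD by (rule Max_in)
  hence w4: "w \<notin> \<omega>" using w3 by auto
  show "w \<notin> \<omega>" by fact
  have xw: "x \<noteq> w" using x1 w4 by auto
  have fU: "finite (\<omega> \<union> \<omega>')" using f1 f2 by simp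
  have xmax: "v \<le> x" if "v \<in> \<omega> \<union> \<omega>'" for v unfolding x_def using fU that by simp
  have wmax: "v \<le> w" if "v \<in> (\<omega> - \<omega>') \<union> (\<omega>' - \<omega>)" for v unfolding w_def using fD that by simp
  have fW: "finite W" unfolding W_def using fU by simp
  show "finite W" by fact
  have above: "v \<in> \<omega>' - {x, w}" if "v \<in> W" "w < v" for v
  proof -
    have "v \<notin> (\<omega> - \<omega>') \<union> (\<omega>' - \<omega>)" using wmax that(2) by force
    thus ?thesis using that(1) unfolding W_def by auto
  qed
  have cw': "card \<omega>' \<le> s" using Om_props(3)[OF w2] .
  have cw: "card \<omega> \<le> s" using Om_props(3)[OF w1] .
  have c2: "card (\<omega>' - {x, w}) + 2 = card \<omega>'"
  proof -
    have "card (\<omega>' - {x, w}) = card \<omega>' - card {x, w}" using x2 w3 f2 by (intro card_Diff_subset) auto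
    moreover have "card {x, w} = 2" using xw by simp
    moreover have "card {x, w} \<le> card \<omega>'" using x2 w3 f2 by (intro card_mono) auto
    ultimately show ?thesis by linarith
  qed
  have cS2: "card (\<omega>' - {x, w}) \<le> s - 2" using c2 cw' by linarith
  have cW2: "card W + 2 = card (\<omega> \<union> \<omega>')"
  proof -
    have "card W = card (\<omega> \<union> \<omega>') - card {x, w}" unfolding W_def using x1 w3 fU by (intro card_Diff_subset) auto
    moreover have "card {x, w} = 2" using xw by simp
    moreover have "card {x, w} \<le> card (\<omega> \<union> \<omega>')" using x1 w3 fU by (intro card_mono) auto
    ultimately show ?thesis by linarith
  qed
  have cU: "card (\<omega> \<union> \<omega>') + 1 \<le> 2 * s"
  proof -
    have "card (\<omega> \<union> \<omega>') + card (\<omega> \<inter> \<omega>') = card \<omega> + card \<omega>'" using f1 f2 by (rule card_Un_Int[symmetric])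
    moreover have "card (\<omega> \<inter> \<omega>') \<ge> 1" using x1 x2 f1 by (metis One_nat_def Int_iff Suc_leI card_gt_0_iff empty_iff finite_Int)
    ultimately show ?thesis using cw cw' by linarith
  qed
  have cW: "card W \<le> 2 * s - 3" using cW2 cU by linarith
  have WN: "W \<subseteq> {1..N}" using sub unfolding W_def by blast
  show "(W, bu W w) \<in> WW N"
  proof (cases "{v\<in>W. v < w} = {}")
    case True
    hence "W \<subseteq> \<omega>' - {x, w}" using above unfolding W_def by fastforce
    hence "card W \<le> card (\<omega>' - {x, w})" using f2 by (intro card_mono) auto
    hence "card W \<le> s - 2" using cS2 by linarith
    thus ?thesis unfolding WW_def bu_def using True WN cW by simp
  next
    case False
    define u where "u = Max {v\<in>W. v < w}"
    have uin: "u \<in> {v\<in>W. v < w}" unfolding u_def using False fW by (intro Max_in) auto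
    have "{v\<in>W. u < v} \<subseteq> \<omega>' - {x, w}"
    proof
      fix v assume v: "v \<in> {v\<in>W. u < v}"
      have "\<not> v < w"
      proof
        assume "v < w"
        hence vin: "v \<in> {v\<in>W. v < w}" using v by simp
        have fin: "finite {v\<in>W. v < w}" using fW by simp
        have "v \<le> Max {v\<in>W. v < w}" using Max_ge[OF fin vin] .
        hence "v \<le> u" unfolding u_def .
        thus False using v by simp
      qed
      moreover have "v \<noteq> w" using v unfolding W_def by auto
      ultimately show "v \<in> \<omega>' - {x, w}" using above v by simp
    qed
    hence "card {v\<in>W. u < v} \<le> card (\<omega>' - {x, w})" using f2 by (intro card_mono) auto
    hence "card {v\<in>W. u < v} \<le> s - 2" using cS2 by linarith
    moreover have "bu W w = u" unfolding bu_def u_def using False by (simp only: if_False)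
    ultimately show ?thesis unfolding WW_def using uin WN cW by simp
  qed
  show "\<omega> - {x} \<subseteq> W" unfolding W_def using w4 by auto
  show "\<omega>' - {x, w} \<subseteq> W" unfolding W_def by auto
  show "x \<in> win lo hi (\<omega> - {x})" by (rule Om_in_win[OF w1 x1])
  have Mx: "Max \<omega> = x"
  proof -
    have "Max \<omega> \<le> x" using f1 x1 xmax by (subst Max_le_iff) auto
    moreover have "x \<le> Max \<omega>" using f1 x1 by simp
    ultimately show ?thesis by simp
  qed
  show "lo / real s \<le> real x" using Om_Max_ge[OF w1] Mx by simp
  have "insert w (insert x (\<omega>' - {x, w})) = \<omega>'" using x2 w3 by auto
  hence "insert w (insert x (\<omega>' - {x, w})) = \<omega>' - {w} \<union> {w}" using w3 by auto
  have wwin: "w \<in> win lo' hi' (\<omega>' - {w})" by (rule Om_in_win[OF w2 w3])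
  have "\<omega>' - {w} = insert x (\<omega>' - {x, w})" using x2 xw by auto
  thus "w \<in> win lo' hi' (insert x (\<omega>' - {x, w}))" using wwin by simp
  show "real (max 1 (bu W w)) \<le> real w"
  proof -
    have "1 \<le> w" using sub w3 by auto
    moreover have "bu W w \<le> w"
    proof (cases "{v\<in>W. v < w} = {}")
      case False
      hence "Max {v\<in>W. v < w} \<in> {v\<in>W. v < w}" using fW by (intro Max_in) auto
      thus ?thesis unfolding bu_def using False by simp
    qed (simp add: bu_def)
    ultimately show ?thesis by simp
  qed
  show "\<omega> \<union> \<omega>' = insert x (insert w W)" unfolding W_def using x1 w3 by auto
  show "x \<notin> insert w W" unfolding W_def using xw by auto
  show "w \<notin> W" unfolding W_def by auto
qed

end


context ctx begin

lemma caseB: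
  assumes N1: "1 \<le> N" and lh: "lo \<le> hi" and lo0: "0 < lo" and lh': "lo' \<le> hi'"
  shows "(\<Sum>(\<omega>,\<omega>')\<in>PB lo hi lo' hi' N. prod (incl_prob s) (\<omega> \<union> \<omega>'))
     \<le> (4 ^ (2 * s) * (real s ^ (2 * s) * (hi - lo + 1) * (lo / real s) powr (bt - 1)) *
         (real s ^ (2 * s + 1) * (hi' - lo' + 1))) * sum wt (WW N)"
proof -
  let ?X1 = "\<lambda>S1. win lo hi S1 \<inter> {x. lo / real s \<le> real x}"
  let ?X2 = "\<lambda>x S2 u. win lo' hi' (insert x S2) \<inter> {w. real (max 1 u) \<le> real w}"
  let ?C = "\<lambda>(W, u). Sigma (Pow W \<times> Pow W) (\<lambda>(S1, S2). Sigma (?X1 S1) (\<lambda>x. ?X2 x S2 u))"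
  let ?TB = "Sigma (WW N) ?C"
  let ?g = "\<lambda>((W::nat set, u::nat), ((S1::nat set, S2::nat set), (x::nat, w::nat))). incl_prob s x * incl_prob s w * prod (incl_prob s) W"
  let ?phi = "\<lambda>(\<omega>, \<omega>'). ((((\<omega> \<union> \<omega>') - {Max (\<omega> \<union> \<omega>'), Max ((\<omega> - \<omega>') \<union> (\<omega>' - \<omega>))}),
                 bu ((\<omega> \<union> \<omega>') - {Max (\<omega> \<union> \<omega>'), Max ((\<omega> - \<omega>') \<union> (\<omega>' - \<omega>))}) (Max ((\<omega> - \<omega>') \<union> (\<omega>' - \<omega>)))),
                ((\<omega> - {Max (\<omega> \<union> \<omega>')}, \<omega>' - {Max (\<omega> \<union> \<omega>'), Max ((\<omega> - \<omega>') \<union> (\<omega>' - \<omega>))}),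
                 (Max (\<omega> \<union> \<omega>'), Max ((\<omega> - \<omega>') \<union> (\<omega>' - \<omega>)))))"
  let ?K1 = "real s ^ (2 * s) * (hi - lo + 1) * (lo / real s) powr (bt - 1)"
  let ?K2 = "real s ^ (2 * s + 1) * (hi' - lo' + 1)"
  have fWW: "finite (WW N)"
    by (rule finite_subset[of _ "Pow {1..N} \<times> {0..N}"]) (auto simp: WW_def)
  have fW: "finite W" if "(W, u) \<in> WW N" for W u using that by (auto simp: WW_def intro: finite_subset)
  have fX1: "finite (?X1 S1)" if "finite S1" for S1
    using win_finite_card(1)[OF that lh] by blast
  have fX2: "finite (?X2 x S2 u)" if "finite S2" for x S2 u
    using win_finite_card(1)[of "insert x S2", OF _ lh'] that by blast
  have fC: "finite (?C Wu)" if "Wu \<in> WW N" for Wu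
  proof -
    obtain W u where Wu: "Wu = (W, u)" by force
    have "finite W" using fW that Wu by blast
    show ?thesis unfolding Wu prod.case
    proof (rule finite_SigmaI)
      show "finite (Pow W \<times> Pow W)" using \<open>finite W\<close> by simp
      fix S assume S: "S \<in> Pow W \<times> Pow W"
      obtain S1 S2 where Se: "S = (S1, S2)" by force
      have "finite S1" "finite S2" using S Se \<open>finite W\<close> by (auto intro: finite_subset)
      hence "finite (Sigma (?X1 S1) (\<lambda>x. ?X2 x S2 u))" by (intro finite_SigmaI fX1 fX2)
      thus "finite ((\<lambda>(S1, S2). Sigma (?X1 S1) (\<lambda>x. ?X2 x S2 u)) S)" unfolding Se by simp
    qed
  qed
  have step1: "(\<Sum>(\<omega>,\<omega>')\<in>PB lo hi lo' hi' N. prod (incl_prob s) (\<omega> \<union> \<omega>')) \<le> sum ?g ?TB"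
  proof (rule sum_inj_le[where \<phi>="?phi"])
    show "finite ?TB" by (rule finite_SigmaI[OF fWW fC])
    show "inj_on ?phi (PB lo hi lo' hi' N)"
    proof (rule inj_onI)
      fix p1 p2 assume P1: "p1 \<in> PB lo hi lo' hi' N" and P2: "p2 \<in> PB lo hi lo' hi' N" and e: "?phi p1 = ?phi p2"
      obtain a b where p1: "p1 = (a, b)" by force
      obtain c d where p2: "p2 = (c, d)" by force
      note F1 = pb_facts[OF P1[unfolded p1]]
      note F2 = pb_facts[OF P2[unfolded p2]]
      have e1: "a - {Max (a \<union> b)} = c - {Max (c \<union> d)}" and e2: "b - {Max (a \<union> b), Max ((a - b) \<union> (b - a))} = d - {Max (c \<union> d), Max ((c - d) \<union> (d - c))}"
        and e3: "Max (a \<union> b) = Max (c \<union> d)" and e4: "Max ((a - b) \<union> (b - a)) = Max ((c - d) \<union> (d - c))"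
        using e unfolding p1 p2 prod.case prod.inject by blast+
      have "a = insert (Max (a \<union> b)) (a - {Max (a \<union> b)})" using F1(1) by auto
      also have "\<dots> = insert (Max (c \<union> d)) (c - {Max (c \<union> d)})" using e1 e3 by simp
      also have "\<dots> = c" using F2(1) by auto
      finally have ac: "a = c" .
      have "b = insert (Max (a \<union> b)) (insert (Max ((a - b) \<union> (b - a))) (b - {Max (a \<union> b), Max ((a - b) \<union> (b - a))}))"
        using F1(2,3) by auto
      also have "\<dots> = insert (Max (c \<union> d)) (insert (Max ((c - d) \<union> (d - c))) (d - {Max (c \<union> d), Max ((c - d) \<union> (d - c))}))"
        using e2 e3 e4 by simp
      also have "\<dots> = d" using F2(2,3) by auto
      finally have bd: "b = d" .
      show "p1 = p2" using p1 p2 ac bd by simp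
    qed
    show "?phi ` PB lo hi lo' hi' N \<subseteq> ?TB"
    proof (rule image_subsetI)
      fix p assume P: "p \<in> PB lo hi lo' hi' N"
      obtain a b where p: "p = (a, b)" by force
      note F = pb_facts[OF P[unfolded p]]
      define x where "x = Max (a \<union> b)"
      define w where "w = Max ((a - b) \<union> (b - a))"
      define W where "W = (a \<union> b) - {x, w}"
      have pe: "?phi p = ((W, bu W w), ((a - {x}, b - {x, w}), (x, w)))"
        unfolding p x_def w_def W_def by simp
      have m1: "(W, bu W w) \<in> WW N" using F(7) unfolding W_def x_def w_def .
      have m2: "(a - {x}, b - {x, w}) \<in> Pow W \<times> Pow W" using F(8,9) unfolding W_def x_def w_def by blast
      have m3: "x \<in> ?X1 (a - {x})" using F(10,11) unfolding x_def by blast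
      have m4: "w \<in> ?X2 x (b - {x, w}) (bu W w)" using F(12,13) unfolding W_def x_def w_def by blast
      have "((a - {x}, b - {x, w}), (x, w)) \<in> ?C (W, bu W w)"
        using m2 m3 m4 by auto
      thus "?phi p \<in> ?TB" unfolding pe using m1 by (rule SigmaI[rotated])
    qed
    show "(case p of (\<omega>,\<omega>') \<Rightarrow> prod (incl_prob s) (\<omega> \<union> \<omega>')) \<le> ?g (?phi p)" if P: "p \<in> PB lo hi lo' hi' N" for p
    proof -
      obtain a b where p: "p = (a, b)" by force
      note F = pb_facts[OF P[unfolded p]]
      define x where "x = Max (a \<union> b)"
      define w where "w = Max ((a - b) \<union> (b - a))"
      define W where "W = (a \<union> b) - {x, w}"
      have pe: "?phi p = ((W, bu W w), ((a - {x}, b - {x, w}), (x, w)))"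
        unfolding p x_def w_def W_def by simp
      have U: "a \<union> b = insert x (insert w W)" using F(14) unfolding W_def x_def w_def .
      have n1: "x \<notin> insert w W" using F(15) unfolding W_def x_def w_def .
      have n2: "w \<notin> W" using F(16) unfolding W_def x_def w_def .
      have fWa: "finite W" using F(17) unfolding W_def x_def w_def .
      have "prod (incl_prob s) (a \<union> b) = incl_prob s x * (incl_prob s w * prod (incl_prob s) W)"
        unfolding U using fWa n1 n2 by simp
      thus ?thesis unfolding pe unfolding p by (simp add: mult_ac)
    qed
    show "0 \<le> ?g b" for b by (auto simp: f_nonneg p_nonneg split: prod.splits)
  qed
  have step2: "sum ?g ?TB \<le> (\<Sum>Wu\<in>WW N. (4 ^ (2 * s) * ?K1 * ?K2) * wt Wu)"
  proof (rule sum_Sigma_le[OF fWW fC])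
    fix Wu assume Wu: "Wu \<in> WW N"
    obtain W u where We: "Wu = (W, u)" by force
    have fWa: "finite W" using fW Wu We by blast
    have cW: "card W \<le> 2 * s" using Wu We by (auto simp: WW_def)
    have t0: "0 < real (max 1 u)" by simp
    have tpow: "real (max 1 u) powr (bt - 1) = (if u = 0 then 1 else real u powr (bt - 1))"
      by (cases "u = 0") (auto simp: max_def)
    have inner: "(\<Sum>c\<in>Sigma (?X1 S1) (\<lambda>x. ?X2 x S2 u). ?g ((W, u), ((S1, S2), c))) \<le> ?K1 * ?K2 * wt (W, u)"
      if S: "(S1, S2) \<in> Pow W \<times> Pow W" for S1 S2
    proof -
      have fS1: "finite S1" and fS2: "finite S2" using S fWa by (auto intro: finite_subset)
      have cS1: "card S1 \<le> 2 * s" using S fWa cW by (meson PowD card_mono mem_Sigma_iff order_trans)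
      have cS2: "card S2 \<le> 2 * s" using S fWa cW by (meson PowD card_mono mem_Sigma_iff order_trans)
      have "(\<Sum>c\<in>Sigma (?X1 S1) (\<lambda>x. ?X2 x S2 u). ?g ((W, u), ((S1, S2), c)))
          \<le> (\<Sum>x\<in>?X1 S1. incl_prob s x * (?K2 * (if u = 0 then 1 else real u powr (bt - 1))) * prod (incl_prob s) W)"
      proof (rule sum_Sigma_le[OF fX1[OF fS1] fX2[OF fS2]])
        fix x assume x: "x \<in> ?X1 S1"
        have sw: "(\<Sum>w\<in>?X2 x S2 u. incl_prob s w) \<le> ?K2 * (if u = 0 then 1 else real u powr (bt - 1))"
        proof -
          have "(\<Sum>w\<in>?X2 x S2 u. incl_prob s w) \<le> real s ^ card (insert x S2) * (hi' - lo' + 1) * real (max 1 u) powr (bt - 1)"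
            using fS2 lh' t0 by (intro win_sum) auto
          also have "\<dots> \<le> ?K2 * real (max 1 u) powr (bt - 1)"
          proof (rule mult_right_mono)
            have "card (insert x S2) \<le> 2 * s + 1" using cS2 card_insert_le_m1
              by (metis Suc_eq_plus1 add_le_mono1 card_insert_if fS2 le_SucI)
            thus "real s ^ card (insert x S2) * (hi' - lo' + 1) \<le> ?K2"
              using s2 lh' by (intro mult_right_mono power_increasing) auto
          qed auto
          finally show ?thesis unfolding tpow .
        qed
        have "(\<Sum>w\<in>?X2 x S2 u. ?g ((W, u), ((S1, S2), (x, w)))) = incl_prob s x * (\<Sum>w\<in>?X2 x S2 u. incl_prob s w) * prod (incl_prob s) W"
          by (simp add: sum_distrib_left sum_distrib_right mult_ac)
        also have "\<dots> \<le> incl_prob s x * (?K2 * (if u = 0 then 1 else real u powr (bt - 1))) * prod (incl_prob s) W"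
          using sw by (intro mult_right_mono mult_left_mono) (auto simp: p_nonneg f_nonneg)
        finally show "(\<Sum>w\<in>?X2 x S2 u. ?g ((W, u), ((S1, S2), (x, w))))
            \<le> incl_prob s x * (?K2 * (if u = 0 then 1 else real u powr (bt - 1))) * prod (incl_prob s) W" .
      qed
      also have "\<dots> = (\<Sum>x\<in>?X1 S1. incl_prob s x) * (?K2 * (if u = 0 then 1 else real u powr (bt - 1)) * prod (incl_prob s) W)"
        by (subst sum_distrib_right) (simp only: mult.assoc)
      also have "\<dots> \<le> ?K1 * (?K2 * (if u = 0 then 1 else real u powr (bt - 1)) * prod (incl_prob s) W)"
      proof (rule mult_right_mono)
        have "(\<Sum>x\<in>?X1 S1. incl_prob s x) \<le> real s ^ card S1 * (hi - lo + 1) * (lo / real s) powr (bt - 1)"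
          using fS1 lh lo0 s2 by (intro win_sum) auto
        also have "\<dots> \<le> ?K1"
          using s2 lh cS1 by (intro mult_right_mono power_increasing) auto
        finally show "(\<Sum>x\<in>?X1 S1. incl_prob s x) \<le> ?K1" .
        show "0 \<le> ?K2 * (if u = 0 then 1 else real u powr (bt - 1)) * prod (incl_prob s) W"
          using lh' by (intro mult_nonneg_nonneg) (auto simp: f_nonneg)
      qed
      also have "\<dots> = ?K1 * ?K2 * wt (W, u)" unfolding wt_def by (simp add: mult_ac)
      finally show ?thesis .
    qed
    have "(\<Sum>b\<in>?C Wu. ?g (Wu, b)) = (\<Sum>b\<in>Sigma (Pow W \<times> Pow W) (\<lambda>(S1, S2). Sigma (?X1 S1) (\<lambda>x. ?X2 x S2 u)). ?g ((W, u), b))"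
      unfolding We by simp
    also have "\<dots> \<le> (\<Sum>S\<in>Pow W \<times> Pow W. ?K1 * ?K2 * wt (W, u))"
    proof (rule sum_Sigma_le)
      show "finite (Pow W \<times> Pow W)" using fWa by simp
      show "finite ((\<lambda>(S1, S2). Sigma (?X1 S1) (\<lambda>x. ?X2 x S2 u)) S)" if "S \<in> Pow W \<times> Pow W" for S
      proof -
        obtain S1 S2 where Se: "S = (S1, S2)" by force
        have "finite S1" "finite S2" using that Se fWa by (auto intro: finite_subset)
        hence "finite (Sigma (?X1 S1) (\<lambda>x. ?X2 x S2 u))" by (intro finite_SigmaI fX1 fX2)
        thus ?thesis unfolding Se by simp
      qed
      show "(\<Sum>c\<in>(\<lambda>(S1, S2). Sigma (?X1 S1) (\<lambda>x. ?X2 x S2 u)) S. ?g ((W, u), (S, c))) \<le> ?K1 * ?K2 * wt (W, u)"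
        if "S \<in> Pow W \<times> Pow W" for S
        using inner[of "fst S" "snd S"] that by (cases S) auto
    qed
    also have "\<dots> = real (card (Pow W \<times> Pow W)) * (?K1 * ?K2 * wt (W, u))" by simp
    also have "\<dots> \<le> 4 ^ (2 * s) * (?K1 * ?K2 * wt (W, u))"
    proof (rule mult_right_mono)
      have "card (Pow W \<times> Pow W) = 2 ^ card W * 2 ^ card W" using fWa by (simp add: card_cartesian_product card_Pow)
      also have "\<dots> = 4 ^ card W" by (simp add: power_mult_distrib[symmetric])
      finally have "real (card (Pow W \<times> Pow W)) = 4 ^ card W" by simp
      also have "\<dots> \<le> 4 ^ (2 * s)" using cW by (intro power_increasing) auto
      finally show "real (card (Pow W \<times> Pow W)) \<le> 4 ^ (2 * s)" .
      show "0 \<le> ?K1 * ?K2 * wt (W, u)" using lh lh' wt_nonneg by (intro mult_nonneg_nonneg) auto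
    qed
    finally show "(\<Sum>b\<in>?C Wu. ?g (Wu, b)) \<le> 4 ^ (2 * s) * ?K1 * ?K2 * wt Wu" using We by (simp add: mult_ac)
  qed
  have "(\<Sum>Wu\<in>WW N. (4 ^ (2 * s) * ?K1 * ?K2) * wt Wu) = (4 ^ (2 * s) * ?K1 * ?K2) * sum wt (WW N)"
    by (simp add: sum_distrib_left)
  thus ?thesis using step1 step2 by (simp add: mult_ac)
qed

end


lemma sum_Un_le_nonneg:
  fixes f :: "'a \<Rightarrow> real"
  assumes "finite A" "finite B" "\<And>x. 0 \<le> f x"
  shows "sum f (A \<union> B) \<le> sum f A + sum f B"
proof -
  have "sum f (A \<union> B) = sum f A + sum f B - sum f (A \<inter> B)" using sum_Un[OF assms(1,2)] by simp
  moreover have "0 \<le> sum f (A \<inter> B)" using assms(3) by (intro sum_nonneg) auto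
  ultimately show ?thesis by simp
qed

lemma related_sym: "related a b = related b a" unfolding related_def by auto

context ctx begin

lemma sum_swap_set:
  fixes F :: "nat set \<Rightarrow> real"
  shows "(\<Sum>(a,b)\<in>{(a,b). Q a b}. F (a \<union> b)) = (\<Sum>(b,a)\<in>{(b,a). Q a b}. F (b \<union> a))"
proof -
  have "(\<Sum>(a,b)\<in>{(a,b). Q a b}. F (a \<union> b)) = (\<Sum>p\<in>prod.swap ` {(b,a). Q a b}. (\<lambda>(a,b). F (a \<union> b)) p)"
    by (intro sum.cong) (auto simp: image_iff)
  also have "\<dots> = (\<Sum>p\<in>{(b,a). Q a b}. (\<lambda>(a,b). F (a \<union> b)) (prod.swap p))"
    using sum.reindex[of prod.swap "{(b,a). Q a b}" "\<lambda>(a,b). F (a \<union> b)"] by (simp add: inj_on_def comp_def)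
  also have "\<dots> = (\<Sum>(b,a)\<in>{(b,a). Q a b}. F (b \<union> a))"
    by (intro sum.cong) (auto simp: Un_commute)
  finally show ?thesis .
qed

lemma decomp:
  assumes hiN: "hi \<le> real N" and hiN': "hi' \<le> real N'"
  shows "(\<Sum>(\<omega>,\<omega>')\<in>{(\<omega>,\<omega>'). \<omega> \<in> Omega_I s lo hi \<and> \<omega>' \<in> Omega_I s lo' hi' \<and> related \<omega> \<omega>'}. prod (incl_prob s) (\<omega> \<union> \<omega>'))
    \<le> (\<Sum>(\<omega>,\<omega>')\<in>{(\<omega>,\<omega>'). \<omega> \<in> Omega_I s lo hi \<and> \<omega>' \<in> Omega_I s lo' hi' \<and> related \<omega> \<omega>' \<and> Max (\<omega> \<union> \<omega>') \<notin> \<omega>}. prod (incl_prob s) (\<omega> \<union> \<omega>'))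
     + (\<Sum>(\<omega>,\<omega>')\<in>{(\<omega>,\<omega>'). \<omega> \<in> Omega_I s lo' hi' \<and> \<omega>' \<in> Omega_I s lo hi \<and> related \<omega> \<omega>' \<and> Max (\<omega> \<union> \<omega>') \<notin> \<omega>}. prod (incl_prob s) (\<omega> \<union> \<omega>'))
     + (\<Sum>(\<omega>,\<omega>')\<in>PB lo hi lo' hi' N. prod (incl_prob s) (\<omega> \<union> \<omega>'))
     + (\<Sum>(\<omega>,\<omega>')\<in>PB lo' hi' lo hi N. prod (incl_prob s) (\<omega> \<union> \<omega>'))"
proof -
  let ?F = "\<lambda>(\<omega>,\<omega>'). prod (incl_prob s) (\<omega> \<union> \<omega>')"
  let ?P = "{(\<omega>,\<omega>'). \<omega> \<in> Omega_I s lo hi \<and> \<omega>' \<in> Omega_I s lo' hi' \<and> related \<omega> \<omega>'}"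
  let ?Pa = "{(\<omega>,\<omega>'). \<omega> \<in> Omega_I s lo hi \<and> \<omega>' \<in> Omega_I s lo' hi' \<and> related \<omega> \<omega>' \<and> Max (\<omega> \<union> \<omega>') \<notin> \<omega>}"
  let ?Pb = "{(\<omega>,\<omega>'). \<omega> \<in> Omega_I s lo hi \<and> \<omega>' \<in> Omega_I s lo' hi' \<and> related \<omega> \<omega>' \<and> Max (\<omega> \<union> \<omega>') \<notin> \<omega>'}"
  let ?Pb' = "{(\<omega>,\<omega>'). \<omega> \<in> Omega_I s lo' hi' \<and> \<omega>' \<in> Omega_I s lo hi \<and> related \<omega> \<omega>' \<and> Max (\<omega> \<union> \<omega>') \<notin> \<omega>}"
  let ?P1 = "PB lo hi lo' hi' N"
  let ?P2 = "{(\<omega>,\<omega>'). (\<omega>',\<omega>) \<in> PB lo' hi' lo hi N}"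
  have fin: "finite (Pow {1..N} \<times> Pow {1..N'})" by simp
  have sP: "?P \<subseteq> Pow {1..N} \<times> Pow {1..N'}" using Om_sub hiN hiN' by blast
  have fP: "finite ?P" using finite_subset[OF sP fin] .
  have fPa: "finite ?Pa" by (rule finite_subset[OF _ fP]) auto
  have fPb: "finite ?Pb" by (rule finite_subset[OF _ fP]) auto
  have fP1: "finite ?P1" by (rule finite_subset[OF _ fP]) (auto simp: PB_def)
  have fP2: "finite ?P2" by (rule finite_subset[OF _ fP]) (auto simp: PB_def related_sym)
  have cover: "?P \<subseteq> ?Pa \<union> ?Pb \<union> ?P1 \<union> ?P2"
  proof
    fix p assume p: "p \<in> ?P"
    obtain a b where pe: "p = (a, b)" by force
    have a: "a \<in> Omega_I s lo hi" and b: "b \<in> Omega_I s lo' hi'" and r: "related a b" using p pe by auto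
    show "p \<in> ?Pa \<union> ?Pb \<union> ?P1 \<union> ?P2"
    proof (cases "Max (a \<union> b) \<in> a \<and> Max (a \<union> b) \<in> b")
      case False
      thus ?thesis using a b r pe by auto
    next
      case True
      have fa: "finite a" "finite b" using Om_props(1) a b by auto
      have "a \<union> b \<subseteq> {1..N}"
      proof
        fix v assume v: "v \<in> a \<union> b"
        have "v \<le> Max (a \<union> b)" using fa v by simp
        moreover have "real (Max (a \<union> b)) \<le> hi" using Om_props(5)[OF a] True by auto
        moreover have "v \<ge> 1" using v Om_props(2)[OF a] Om_props(2)[OF b] by auto
        ultimately show "v \<in> {1..N}" using hiN by simp
      qed
      show ?thesis
      proof (cases "Max ((a - b) \<union> (b - a)) \<in> b")
        case True2: True
        hence "p \<in> ?P1" unfolding PB_def using a b r True \<open>a \<union> b \<subseteq> {1..N}\<close> pe by auto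
        thus ?thesis by blast
      next
        case False2: False
        have ne: "(a - b) \<union> (b - a) \<noteq> {}" using r unfolding related_def by auto
        have "Max ((a - b) \<union> (b - a)) \<in> (a - b) \<union> (b - a)" using fa ne by (intro Max_in) auto
        hence wa: "Max ((a - b) \<union> (b - a)) \<in> a" using False2 by auto
        have "(b, a) \<in> PB lo' hi' lo hi N"
          unfolding PB_def using a b r True \<open>a \<union> b \<subseteq> {1..N}\<close> wa
          unfolding PB_def using a b r True \<open>a \<union> b \<subseteq> {1..N}\<close> False2
          by (auto simp: related_sym Un_commute)
        hence "p \<in> ?P2" using pe by auto
        thus ?thesis by blast
      qed
    qed
  qed
  have nn: "0 \<le> ?F x" for x by (auto simp: f_nonneg split: prod.splits)
  have "sum ?F ?P \<le> sum ?F (?Pa \<union> ?Pb \<union> ?P1 \<union> ?P2)"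
    by (rule sum_mono2) (use fPa fPb fP1 fP2 cover nn in auto)
  also have "\<dots> \<le> sum ?F (?Pa \<union> ?Pb \<union> ?P1) + sum ?F ?P2"
    by (rule sum_Un_le_nonneg) (use fPa fPb fP1 fP2 nn in auto)
  also have "sum ?F (?Pa \<union> ?Pb \<union> ?P1) \<le> sum ?F (?Pa \<union> ?Pb) + sum ?F ?P1"
    by (rule sum_Un_le_nonneg) (use fPa fPb fP1 nn in auto)
  also have "sum ?F (?Pa \<union> ?Pb) \<le> sum ?F ?Pa + sum ?F ?Pb"
    by (rule sum_Un_le_nonneg) (use fPa fPb nn in auto)
  also have "sum ?F ?Pb = sum ?F ?Pb'"
  proof -
    have "sum ?F ?Pb = (\<Sum>(b,a)\<in>{(b,a). a \<in> Omega_I s lo hi \<and> b \<in> Omega_I s lo' hi' \<and> related a b \<and> Max (a \<union> b) \<notin> b}. prod (incl_prob s) (b \<union> a))"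
      by (rule sum_swap_set)
    also have "\<dots> = sum ?F ?Pb'"
      by (intro sum.cong) (auto simp: related_sym Un_commute)
    finally show ?thesis .
  qed
  also have "sum ?F ?P2 = sum ?F (PB lo' hi' lo hi N)"
  proof -
    have "sum ?F ?P2 = (\<Sum>(b,a)\<in>{(b,a). (b,a) \<in> PB lo' hi' lo hi N}. prod (incl_prob s) (b \<union> a))"
      by (rule sum_swap_set)
    thus ?thesis by simp
  qed
  finally show ?thesis by linarith
qed

end


context ctx begin

lemma key_pow:
  assumes k1: "1 \<le> k" and N0: "0 < N" and Nk: "N \<le> Ab * k" and a0: "0 \<le> a" and Ab0: "0 < Ab"
  shows "N powr a * (k / real s) powr (bt - 1) \<le> (Ab powr a * real s powr (1 - bt)) * k powr (a + bt - 1)"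
proof -
  have "N powr a \<le> (Ab * k) powr a" using N0 Nk a0 by (intro powr_mono2) auto
  also have "\<dots> = Ab powr a * k powr a" using Ab0 k1 by (simp add: powr_mult)
  finally have h1: "N powr a \<le> Ab powr a * k powr a" .
  have h2: "(k / real s) powr (bt - 1) = k powr (bt - 1) * real s powr (1 - bt)"
    using k1 s2 by (simp add: powr_divide powr_minus_divide divide_simps powr_diff)
  have "N powr a * (k / real s) powr (bt - 1) \<le> (Ab powr a * k powr a) * (k / real s) powr (bt - 1)"
    using h1 by (intro mult_right_mono) auto
  also have "\<dots> = (Ab powr a * real s powr (1 - bt)) * (k powr a * k powr (bt - 1))"
    unfolding h2 by (simp add: mult_ac)
  also have "k powr a * k powr (bt - 1) = k powr (a + bt - 1)" using k1 by (simp add: powr_add[symmetric] add_diff_eq)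
  finally show ?thesis .
qed

lemma k_facts:
  assumes a0: "\<alpha> > 0" and k2: "2 \<le> k"
  shows "real k + \<alpha> * ln (real k) \<le> real (nat \<lceil>real k + \<alpha> * ln (real k)\<rceil>)"
    "1 \<le> nat \<lceil>real k + \<alpha> * ln (real k)\<rceil>"
    "real (nat \<lceil>real k + \<alpha> * ln (real k)\<rceil>) \<le> (2 + \<alpha>) * real k"
    "real k \<le> real k + \<alpha> * ln (real k)"
    "\<alpha> * ln (real k) + 1 \<le> (\<alpha> + 2) * ln (real k)"
    "1 + ln (real (nat \<lceil>real k + \<alpha> * ln (real k)\<rceil>)) \<le> (3 + 2 * ln (2 + \<alpha>)) * ln (real k)"
    "0 < ln (real k)"
proof -
  let ?h = "real k + \<alpha> * ln (real k)"
  have lnk: "0 \<le> ln (real k)" using k2 by simp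
  have lnk2: "ln 2 \<le> ln (real k)" using k2 by simp
  have ln2: "1/2 \<le> ln (2::real)" using ln_2_less_1 ln2_ge_two_thirds by linarith
  have one: "1 \<le> 2 * ln (real k)" using lnk2 ln2 by linarith
  show "0 < ln (real k)" using one by linarith
  have h0: "0 \<le> ?h" using lnk a0 k2 by simp
  show "?h \<le> real (nat \<lceil>?h\<rceil>)" using h0 by linarith
  have "real k \<le> ?h" using lnk a0 by simp
  hence "1 \<le> \<lceil>?h\<rceil>" using k2 by (simp add: le_ceiling_iff)
  from nat_mono[OF this] show N1n: "1 \<le> nat \<lceil>?h\<rceil>" by simp
  have lk: "ln (real k) \<le> real k" using k2 ln_le_minus_one[of "real k"] by simp
  have "real (nat \<lceil>?h\<rceil>) \<le> ?h + 1" using h0 by linarith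
  also have "\<dots> \<le> real k + \<alpha> * real k + real k"
  proof -
    have "\<alpha> * ln (real k) \<le> \<alpha> * real k" using lk a0 by (intro mult_left_mono) auto
    thus ?thesis using k2 by linarith
  qed
  finally show hN: "real (nat \<lceil>?h\<rceil>) \<le> (2 + \<alpha>) * real k" by (simp add: algebra_simps)
  show "real k \<le> ?h" using lnk a0 by simp
  show "\<alpha> * ln (real k) + 1 \<le> (\<alpha> + 2) * ln (real k)" using one by (simp add: algebra_simps)
  have N1: "1 \<le> real (nat \<lceil>?h\<rceil>)" using N1n by linarith
  have "ln (real (nat \<lceil>?h\<rceil>)) \<le> ln ((2 + \<alpha>) * real k)" 
  proof (rule ln_mono)
    show "0 < real (nat \<lceil>?h\<rceil>)" using N1 by linarith
  qed (use hN in auto)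
  also have "\<dots> = ln (2 + \<alpha>) + ln (real k)" using a0 k2 by (simp add: ln_mult)
  finally have "1 + ln (real (nat \<lceil>?h\<rceil>)) \<le> 1 + ln (2 + \<alpha>) + ln (real k)" by simp
  also have "\<dots> \<le> (3 + 2 * ln (2 + \<alpha>)) * ln (real k)"
  proof -
    have l0: "0 \<le> ln (2 + \<alpha>)" using a0 by simp
    have "ln (2 + \<alpha>) * 1 \<le> ln (2 + \<alpha>) * (2 * ln (real k))" using l0 one by (intro mult_left_mono) auto
    hence "ln (2 + \<alpha>) \<le> 2 * ln (2 + \<alpha>) * ln (real k)" by (simp add: mult_ac)
    thus ?thesis using one by (simp add: algebra_simps)
  qed
  finally show "1 + ln (real (nat \<lceil>?h\<rceil>)) \<le> (3 + 2 * ln (2 + \<alpha>)) * ln (real k)" .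
qed

end


context ctx begin

definition c1 :: "real \<Rightarrow> real" where
  "c1 \<alpha> = real s * real s ^ (s - 1) * ((2 + \<alpha>) powr (real (s - 1) * bt) * real s powr (1 - bt))"
definition c2 :: "real \<Rightarrow> real" where
  "c2 \<alpha> = 2 ^ s * real s * real s ^ (2 * s) * ((2 + \<alpha>) powr (real (s - 2) * bt) * real s powr (1 - bt))"
definition c3 :: "real \<Rightarrow> real" where
  "c3 \<alpha> = 4 ^ (2 * s) * real s ^ (2 * s) * real s ^ (2 * s + 1) * (3 * real s) * ((2 + \<alpha>) powr (1 - 2 * bt) * real s powr (1 - bt))"

lemma c_pos: assumes "\<alpha> > 0" shows "0 < c1 \<alpha>" "0 < c2 \<alpha>" "0 < c3 \<alpha>"
  using assms s2 by (auto simp: c1_def c2_def c3_def)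

lemma S_bound:
  assumes a0: "\<alpha> > 0" and k2: "2 \<le> k"
  shows "(\<Sum>\<omega>\<in>Omega_I s (real k) (real k + \<alpha> * ln (real k)). prod (incl_prob s) \<omega>) \<le> c1 \<alpha> * (\<alpha> * ln (real k) + 1)"
proof -
  note kf = k_facts[OF a0 k2]
  let ?h = "real k + \<alpha> * ln (real k)"
  let ?N = "nat \<lceil>?h\<rceil>"
  have "(\<Sum>\<omega>\<in>Omega_I s (real k) ?h. prod (incl_prob s) \<omega>)
      \<le> real s * real ?N powr (real (s-1) * bt) * (real s ^ (s-1) * (?h - real k + 1) * (real k / real s) powr (bt - 1))"
    by (rule Om_sum) (use kf k2 in auto)
  also have "\<dots> = (real s * real s ^ (s-1) * (?h - real k + 1)) * (real ?N powr (real (s-1) * bt) * (real k / real s) powr (bt - 1))"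
    by (simp add: mult_ac)
  also have "\<dots> \<le> (real s * real s ^ (s-1) * (?h - real k + 1)) * (((2 + \<alpha>) powr (real (s-1) * bt) * real s powr (1 - bt)) * real k powr (real (s-1) * bt + bt - 1))"
  proof (rule mult_left_mono)
    show "real ?N powr (real (s-1) * bt) * (real k / real s) powr (bt - 1) \<le> ((2 + \<alpha>) powr (real (s-1) * bt) * real s powr (1 - bt)) * real k powr (real (s-1) * bt + bt - 1)"
    proof (rule key_pow)
      show "0 < real ?N" using kf(2) by linarith
      show "real ?N \<le> (2 + \<alpha>) * real k" using kf(3) .
    qed (use k2 a0 bt_pos in auto)
  qed (use kf a0 in auto)
  also have "real (s-1) * bt + bt - 1 = 0" using s_bt s2 by (simp add: of_nat_diff algebra_simps)
  finally show ?thesis using k2 by (simp add: c1_def mult_ac)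
qed

end


context ctx begin

lemma Ka_bound:
  assumes a0: "\<alpha> > 0" and k2: "2 \<le> k"
  shows "2 ^ s * (real (s-2+1) * real (nat \<lceil>real k + \<alpha> * ln (real k)\<rceil>) powr (real (s-2) * bt)) *
         (real s ^ (2 * s) * ((real k + \<alpha> * ln (real k)) - real k + 1) * (real k / real s) powr (bt - 1))
       \<le> c2 \<alpha> * (\<alpha> * ln (real k) + 1) * real k powr (- bt)"
proof -
  note kf = k_facts[OF a0 k2]
  let ?N = "nat \<lceil>real k + \<alpha> * ln (real k)\<rceil>"
  have L0: "0 \<le> \<alpha> * ln (real k) + 1" using kf(7) a0 by simp
  have kp: "real ?N powr (real (s-2) * bt) * (real k / real s) powr (bt - 1) \<le> ((2 + \<alpha>) powr (real (s-2) * bt) * real s powr (1 - bt)) * real k powr (real (s-2) * bt + bt - 1)"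
  proof (rule key_pow)
    show "0 < real ?N" using kf(2) by linarith
    show "real ?N \<le> (2 + \<alpha>) * real k" using kf(3) .
  qed (use k2 a0 bt_pos in auto)
  have ex: "real (s-2) * bt + bt - 1 = - bt" using s_bt s2 by (simp add: of_nat_diff algebra_simps)
  have "2 ^ s * (real (s-2+1) * real ?N powr (real (s-2) * bt)) *
         (real s ^ (2 * s) * ((real k + \<alpha> * ln (real k)) - real k + 1) * (real k / real s) powr (bt - 1))
      = (2 ^ s * real (s-2+1) * real s ^ (2 * s) * (\<alpha> * ln (real k) + 1)) * (real ?N powr (real (s-2) * bt) * (real k / real s) powr (bt - 1))"
    by (simp add: mult_ac)
  also have "\<dots> \<le> (2 ^ s * real (s-2+1) * real s ^ (2 * s) * (\<alpha> * ln (real k) + 1)) * (((2 + \<alpha>) powr (real (s-2) * bt) * real s powr (1 - bt)) * real k powr (- bt))"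
    using kp L0 unfolding ex by (intro mult_left_mono) auto
  also have "\<dots> \<le> (2 ^ s * real s * real s ^ (2 * s) * (\<alpha> * ln (real k) + 1)) * (((2 + \<alpha>) powr (real (s-2) * bt) * real s powr (1 - bt)) * real k powr (- bt))"
  proof (rule mult_right_mono)
    have "real (s-2+1) \<le> real s" using s2 by simp
    thus "2 ^ s * real (s-2+1) * real s ^ (2 * s) * (\<alpha> * ln (real k) + 1) \<le> 2 ^ s * real s * real s ^ (2 * s) * (\<alpha> * ln (real k) + 1)"
      using L0 by (intro mult_right_mono mult_left_mono) auto
  qed auto
  also have "\<dots> = c2 \<alpha> * (\<alpha> * ln (real k) + 1) * real k powr (- bt)" by (simp add: c2_def mult_ac)
  finally show ?thesis .
qed

lemma Kc_bound:
  assumes a0: "\<alpha> > 0" and k2: "2 \<le> k" and kk: "k \<le> k'" and LA: "0 \<le> LA" and LB: "0 \<le> LB"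
  shows "(4 ^ (2 * s) * (real s ^ (2 * s) * LA * (real k' / real s) powr (bt - 1)) * (real s ^ (2 * s + 1) * LB)) *
         (3 * real s * real (nat \<lceil>real k + \<alpha> * ln (real k)\<rceil>) powr (1 - 2 * bt) * (1 + ln (real (nat \<lceil>real k + \<alpha> * ln (real k)\<rceil>))))
       \<le> c3 \<alpha> * LA * LB * real k powr (- bt) * (1 + ln (real (nat \<lceil>real k + \<alpha> * ln (real k)\<rceil>)))"
proof -
  note kf = k_facts[OF a0 k2]
  let ?N = "nat \<lceil>real k + \<alpha> * ln (real k)\<rceil>"
  let ?lN = "1 + ln (real ?N)"
  have lN0: "0 \<le> ?lN" using kf(2) by simp
  have kp: "real ?N powr (1 - 2 * bt) * (real k / real s) powr (bt - 1) \<le> ((2 + \<alpha>) powr (1 - 2 * bt) * real s powr (1 - bt)) * real k powr ((1 - 2 * bt) + bt - 1)"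
  proof (rule key_pow)
    show "0 < real ?N" using kf(2) by linarith
    show "real ?N \<le> (2 + \<alpha>) * real k" using kf(3) .
  qed (use k2 a0 bt_le in auto)
  have ex: "(1 - 2 * bt) + bt - 1 = - bt" by simp
  have mono: "(real k' / real s) powr (bt - 1) \<le> (real k / real s) powr (bt - 1)"
    using k2 kk s2 bt_le by (intro powr_mono2') (auto simp: divide_right_mono)
  have "(4 ^ (2 * s) * (real s ^ (2 * s) * LA * (real k' / real s) powr (bt - 1)) * (real s ^ (2 * s + 1) * LB)) *
         (3 * real s * real ?N powr (1 - 2 * bt) * ?lN)
      = (4 ^ (2 * s) * real s ^ (2 * s) * real s ^ (2 * s + 1) * (3 * real s) * LA * LB * ?lN) * ((real k' / real s) powr (bt - 1) * real ?N powr (1 - 2 * bt))"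
    by (simp add: mult_ac)
  also have "\<dots> \<le> (4 ^ (2 * s) * real s ^ (2 * s) * real s ^ (2 * s + 1) * (3 * real s) * LA * LB * ?lN) * ((real k / real s) powr (bt - 1) * real ?N powr (1 - 2 * bt))"
    using mono LA LB lN0 by (intro mult_left_mono mult_right_mono) auto
  also have "\<dots> \<le> (4 ^ (2 * s) * real s ^ (2 * s) * real s ^ (2 * s + 1) * (3 * real s) * LA * LB * ?lN) * (((2 + \<alpha>) powr (1 - 2 * bt) * real s powr (1 - bt)) * real k powr (- bt))"
    using kp LA LB lN0 unfolding ex by (intro mult_left_mono) (auto simp: mult.commute)
  also have "\<dots> = c3 \<alpha> * LA * LB * real k powr (- bt) * ?lN" by (simp add: c3_def mult_ac)
  finally show ?thesis .
qed

end


context ctx begin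

definition CC :: "real \<Rightarrow> real" where
  "CC \<alpha> = (2 * c1 \<alpha> * c2 \<alpha> + 2 * c3 \<alpha>) * (\<alpha> + 2)^2 * (3 + 2 * ln (2 + \<alpha>))"

lemma CC_pos: "\<alpha> > 0 \<Longrightarrow> CC \<alpha> > 0"
  using c_pos[of \<alpha>] unfolding CC_def
  by (intro mult_pos_pos add_pos_pos) (auto intro: add_pos_nonneg)

lemma main_bound:
  fixes \<alpha> :: real and i j :: nat
  assumes a0: "\<alpha> > 0" and i2: "2 \<le> i" and ij: "i \<le> j"
  shows "(\<Sum>(\<omega>,\<omega>')\<in>{(\<omega>,\<omega>'). \<omega> \<in> Omega_I s (real i) (real i + \<alpha> * ln (real i)) \<and>
              \<omega>' \<in> Omega_I s (real j) (real j + \<alpha> * ln (real j)) \<and> related \<omega> \<omega>'}. prod (incl_prob s) (\<omega> \<union> \<omega>'))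
         \<le> CC \<alpha> * real i powr (- bt) * (ln (real i))\<^sup>2 * ln (real j)"
proof -
  have j2: "2 \<le> j" using i2 ij by simp
  note fi = k_facts[OF a0 i2]
  note fj = k_facts[OF a0 j2]
  define hi where "hi = real i + \<alpha> * ln (real i)"
  define hj where "hj = real j + \<alpha> * ln (real j)"
  define Ni where "Ni = nat \<lceil>hi\<rceil>"
  define Nj where "Nj = nat \<lceil>hj\<rceil>"
  define Li where "Li = \<alpha> * ln (real i) + 1"
  define Lj where "Lj = \<alpha> * ln (real j) + 1"
  define lN where "lN = 1 + ln (real Ni)"
  define X where "X = Li * Lj * real i powr (- bt)"
  have Li0: "0 \<le> Li" and Lj0: "0 \<le> Lj" using fi(7) fj(7) a0 unfolding Li_def Lj_def by auto
  have lN1: "1 \<le> lN" using fi(2) unfolding lN_def Ni_def hi_def by simp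
  have X0: "0 \<le> X" using Li0 Lj0 unfolding X_def by simp
  have hiN: "hi \<le> real Ni" and hjN: "hj \<le> real Nj" using fi(1) fj(1) unfolding hi_def hj_def Ni_def Nj_def by auto
  have Ni1: "1 \<le> Ni" and Nj1: "1 \<le> Nj" using fi(2) fj(2) unfolding Ni_def Nj_def hi_def hj_def by auto
  have ihi: "real i \<le> hi" and jhj: "real j \<le> hj" using fi(4) fj(4) unfolding hi_def hj_def by auto
  have hiL: "hi - real i + 1 = Li" and hjL: "hj - real j + 1 = Lj" unfolding hi_def hj_def Li_def Lj_def by auto
  have pw: "real j powr (- bt) \<le> real i powr (- bt)" using ij i2 bt_pos by (intro powr_mono2') auto
  have Si: "(\<Sum>\<omega>\<in>Omega_I s (real i) hi. prod (incl_prob s) \<omega>) \<le> c1 \<alpha> * Li"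
    using S_bound[OF a0 i2] unfolding hi_def Li_def .
  have Sj: "(\<Sum>\<omega>\<in>Omega_I s (real j) hj. prod (incl_prob s) \<omega>) \<le> c1 \<alpha> * Lj"
    using S_bound[OF a0 j2] unfolding hj_def Lj_def .
  have Kai: "2 ^ s * (real (s-2+1) * real Ni powr (real (s-2) * bt)) *
         (real s ^ (2 * s) * (hi - real i + 1) * (real i / real s) powr (bt - 1)) \<le> c2 \<alpha> * Li * real i powr (- bt)"
    using Ka_bound[OF a0 i2] unfolding hi_def Ni_def Li_def .
  have Kaj: "2 ^ s * (real (s-2+1) * real Nj powr (real (s-2) * bt)) *
         (real s ^ (2 * s) * (hj - real j + 1) * (real j / real s) powr (bt - 1)) \<le> c2 \<alpha> * Lj * real j powr (- bt)"
    using Ka_bound[OF a0 j2] unfolding hj_def Nj_def Lj_def .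
  have Ka0: "0 \<le> 2 ^ s * (real (s-2+1) * real Nj powr (real (s-2) * bt)) *
         (real s ^ (2 * s) * (hj - real j + 1) * (real j / real s) powr (bt - 1))" using hjL Lj0 by simp
  have Kb0: "0 \<le> 2 ^ s * (real (s-2+1) * real Ni powr (real (s-2) * bt)) *
         (real s ^ (2 * s) * (hi - real i + 1) * (real i / real s) powr (bt - 1))" using hiL Li0 by simp
  have W: "sum wt (WW Ni) \<le> 3 * real s * real Ni powr (1 - 2 * bt) * (1 + ln (real Ni))" by (rule Wsum[OF Ni1])
  have c10: "0 \<le> c1 \<alpha>" and c20: "0 \<le> c2 \<alpha>" and c30: "0 \<le> c3 \<alpha>" using c_pos[OF a0] by auto
  let ?F = "\<lambda>(\<omega>,\<omega>'). prod (incl_prob s) (\<omega> \<union> \<omega>')"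
  have D: "(\<Sum>(\<omega>,\<omega>')\<in>{(\<omega>,\<omega>'). \<omega> \<in> Omega_I s (real i) hi \<and> \<omega>' \<in> Omega_I s (real j) hj \<and> related \<omega> \<omega>'}. prod (incl_prob s) (\<omega> \<union> \<omega>'))
    \<le> (\<Sum>(\<omega>,\<omega>')\<in>{(\<omega>,\<omega>'). \<omega> \<in> Omega_I s (real i) hi \<and> \<omega>' \<in> Omega_I s (real j) hj \<and> related \<omega> \<omega>' \<and> Max (\<omega> \<union> \<omega>') \<notin> \<omega>}. prod (incl_prob s) (\<omega> \<union> \<omega>'))
     + (\<Sum>(\<omega>,\<omega>')\<in>{(\<omega>,\<omega>'). \<omega> \<in> Omega_I s (real j) hj \<and> \<omega>' \<in> Omega_I s (real i) hi \<and> related \<omega> \<omega>' \<and> Max (\<omega> \<union> \<omega>') \<notin> \<omega>}. prod (incl_prob s) (\<omega> \<union> \<omega>'))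
     + (\<Sum>(\<omega>,\<omega>')\<in>PB (real i) hi (real j) hj Ni. prod (incl_prob s) (\<omega> \<union> \<omega>'))
     + (\<Sum>(\<omega>,\<omega>')\<in>PB (real j) hj (real i) hi Ni. prod (incl_prob s) (\<omega> \<union> \<omega>'))"
    by (rule decomp[OF hiN hjN])
  have Ta: "(\<Sum>(\<omega>,\<omega>')\<in>{(\<omega>,\<omega>'). \<omega> \<in> Omega_I s (real i) hi \<and> \<omega>' \<in> Omega_I s (real j) hj \<and> related \<omega> \<omega>' \<and> Max (\<omega> \<union> \<omega>') \<notin> \<omega>}. prod (incl_prob s) (\<omega> \<union> \<omega>'))
      \<le> c1 \<alpha> * c2 \<alpha> * X"
  proof -
    have "(\<Sum>(\<omega>,\<omega>')\<in>{(\<omega>,\<omega>'). \<omega> \<in> Omega_I s (real i) hi \<and> \<omega>' \<in> Omega_I s (real j) hj \<and> related \<omega> \<omega>' \<and> Max (\<omega> \<union> \<omega>') \<notin> \<omega>}. prod (incl_prob s) (\<omega> \<union> \<omega>'))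
      \<le> (\<Sum>\<omega>\<in>Omega_I s (real i) hi. prod (incl_prob s) \<omega>) *
        (2 ^ s * (real (s-2+1) * real Nj powr (real (s-2) * bt)) *
         (real s ^ (2 * s) * (hj - real j + 1) * (real j / real s) powr (bt - 1)))"
      by (rule caseA[OF Nj1 hjN]) (use jhj j2 hiN in auto)
    also have "\<dots> \<le> (c1 \<alpha> * Li) * (c2 \<alpha> * Lj * real j powr (- bt))"
      by (rule mult_mono[OF Si Kaj]) (use c10 Li0 Ka0 in auto)
    also have "\<dots> \<le> (c1 \<alpha> * Li) * (c2 \<alpha> * Lj * real i powr (- bt))"
      using pw c10 c20 Li0 Lj0 by (intro mult_left_mono) auto
    also have "\<dots> = c1 \<alpha> * c2 \<alpha> * X" unfolding X_def by (simp add: mult_ac)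
    finally show ?thesis .
  qed
  have Tb: "(\<Sum>(\<omega>,\<omega>')\<in>{(\<omega>,\<omega>'). \<omega> \<in> Omega_I s (real j) hj \<and> \<omega>' \<in> Omega_I s (real i) hi \<and> related \<omega> \<omega>' \<and> Max (\<omega> \<union> \<omega>') \<notin> \<omega>}. prod (incl_prob s) (\<omega> \<union> \<omega>'))
      \<le> c1 \<alpha> * c2 \<alpha> * X"
  proof -
    have "(\<Sum>(\<omega>,\<omega>')\<in>{(\<omega>,\<omega>'). \<omega> \<in> Omega_I s (real j) hj \<and> \<omega>' \<in> Omega_I s (real i) hi \<and> related \<omega> \<omega>' \<and> Max (\<omega> \<union> \<omega>') \<notin> \<omega>}. prod (incl_prob s) (\<omega> \<union> \<omega>'))
      \<le> (\<Sum>\<omega>\<in>Omega_I s (real j) hj. prod (incl_prob s) \<omega>) *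
        (2 ^ s * (real (s-2+1) * real Ni powr (real (s-2) * bt)) *
         (real s ^ (2 * s) * (hi - real i + 1) * (real i / real s) powr (bt - 1)))"
      by (rule caseA[OF Ni1 hiN]) (use ihi i2 hjN in auto)
    also have "\<dots> \<le> (c1 \<alpha> * Lj) * (c2 \<alpha> * Li * real i powr (- bt))"
      by (rule mult_mono[OF Sj Kai]) (use c10 Lj0 Kb0 in auto)
    also have "\<dots> = c1 \<alpha> * c2 \<alpha> * X" unfolding X_def by (simp add: mult_ac)
    finally show ?thesis .
  qed
  have Tc: "(\<Sum>(\<omega>,\<omega>')\<in>PB (real i) hi (real j) hj Ni. prod (incl_prob s) (\<omega> \<union> \<omega>')) \<le> c3 \<alpha> * X * lN"
  proof -
    have "(\<Sum>(\<omega>,\<omega>')\<in>PB (real i) hi (real j) hj Ni. prod (incl_prob s) (\<omega> \<union> \<omega>'))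
      \<le> (4 ^ (2 * s) * (real s ^ (2 * s) * (hi - real i + 1) * (real i / real s) powr (bt - 1)) *
         (real s ^ (2 * s + 1) * (hj - real j + 1))) * sum wt (WW Ni)"
      by (rule caseB[OF Ni1]) (use ihi jhj i2 in auto)
    also have "\<dots> \<le> (4 ^ (2 * s) * (real s ^ (2 * s) * Li * (real i / real s) powr (bt - 1)) *
         (real s ^ (2 * s + 1) * Lj)) * (3 * real s * real Ni powr (1 - 2 * bt) * (1 + ln (real Ni)))"
      unfolding hiL hjL using W Li0 Lj0 by (intro mult_left_mono) auto
    also have "\<dots> \<le> c3 \<alpha> * Li * Lj * real i powr (- bt) * (1 + ln (real Ni))"
      using Kc_bound[OF a0 i2 order.refl Li0 Lj0] unfolding Ni_def hi_def .
    also have "\<dots> = c3 \<alpha> * X * lN" unfolding X_def lN_def by (simp add: mult_ac)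
    finally show ?thesis .
  qed
  have Td: "(\<Sum>(\<omega>,\<omega>')\<in>PB (real j) hj (real i) hi Ni. prod (incl_prob s) (\<omega> \<union> \<omega>')) \<le> c3 \<alpha> * X * lN"
  proof -
    have "(\<Sum>(\<omega>,\<omega>')\<in>PB (real j) hj (real i) hi Ni. prod (incl_prob s) (\<omega> \<union> \<omega>'))
      \<le> (4 ^ (2 * s) * (real s ^ (2 * s) * (hj - real j + 1) * (real j / real s) powr (bt - 1)) *
         (real s ^ (2 * s + 1) * (hi - real i + 1))) * sum wt (WW Ni)"
      by (rule caseB[OF Ni1]) (use ihi jhj j2 in auto)
    also have "\<dots> \<le> (4 ^ (2 * s) * (real s ^ (2 * s) * Lj * (real j / real s) powr (bt - 1)) *
         (real s ^ (2 * s + 1) * Li)) * (3 * real s * real Ni powr (1 - 2 * bt) * (1 + ln (real Ni)))"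
      unfolding hiL hjL using W Li0 Lj0 by (intro mult_left_mono) auto
    also have "\<dots> \<le> c3 \<alpha> * Lj * Li * real i powr (- bt) * (1 + ln (real Ni))"
      using Kc_bound[OF a0 i2 ij Lj0 Li0] unfolding Ni_def hi_def .
    also have "\<dots> = c3 \<alpha> * X * lN" unfolding X_def lN_def by (simp add: mult_ac)
    finally show ?thesis .
  qed
  have cX: "0 \<le> c1 \<alpha> * c2 \<alpha> * X" using X0 c10 c20 by simp
  have "c1 \<alpha> * c2 \<alpha> * X \<le> c1 \<alpha> * c2 \<alpha> * X * lN"
    using mult_left_mono[OF lN1 cX] by simp
  hence tot: "(\<Sum>(\<omega>,\<omega>')\<in>{(\<omega>,\<omega>'). \<omega> \<in> Omega_I s (real i) hi \<and> \<omega>' \<in> Omega_I s (real j) hj \<and> related \<omega> \<omega>'}. prod (incl_prob s) (\<omega> \<union> \<omega>'))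
      \<le> (2 * c1 \<alpha> * c2 \<alpha> + 2 * c3 \<alpha>) * (Li * Lj * lN) * real i powr (- bt)"
    using D Ta Tb Tc Td unfolding X_def by (simp add: algebra_simps)
  have "Li * Lj * lN \<le> ((\<alpha> + 2) * ln (real i)) * ((\<alpha> + 2) * ln (real j)) * ((3 + 2 * ln (2 + \<alpha>)) * ln (real i))"
  proof (intro mult_mono)
    show "Li \<le> (\<alpha> + 2) * ln (real i)" using fi(5) unfolding Li_def .
    show "Lj \<le> (\<alpha> + 2) * ln (real j)" using fj(5) unfolding Lj_def .
    show "lN \<le> (3 + 2 * ln (2 + \<alpha>)) * ln (real i)" using fi(6) unfolding lN_def Ni_def hi_def .
  qed (use Li0 Lj0 lN1 a0 fi(7) fj(7) in auto)
  also have "\<dots> = (\<alpha> + 2)^2 * (3 + 2 * ln (2 + \<alpha>)) * ((ln (real i))\<^sup>2 * ln (real j))"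
    by (simp add: power2_eq_square mult_ac)
  finally have LL: "Li * Lj * lN \<le> (\<alpha> + 2)^2 * (3 + 2 * ln (2 + \<alpha>)) * ((ln (real i))\<^sup>2 * ln (real j))" .
  have cpos: "0 \<le> 2 * c1 \<alpha> * c2 \<alpha> + 2 * c3 \<alpha>" using c10 c20 c30 by simp
  have "(2 * c1 \<alpha> * c2 \<alpha> + 2 * c3 \<alpha>) * (Li * Lj * lN) * real i powr (- bt)
      \<le> (2 * c1 \<alpha> * c2 \<alpha> + 2 * c3 \<alpha>) * ((\<alpha> + 2)^2 * (3 + 2 * ln (2 + \<alpha>)) * ((ln (real i))\<^sup>2 * ln (real j))) * real i powr (- bt)"
    using LL cpos by (intro mult_right_mono mult_left_mono) auto
  also have "\<dots> = CC \<alpha> * real i powr (- bt) * (ln (real i))\<^sup>2 * ln (real j)" unfolding CC_def by (simp add: mult_ac)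
  finally show ?thesis using tot unfolding hi_def hj_def by linarith
qed

end


lemma meas_pair:
  assumes ps: "prob_space M" and ind: "prob_space.indep_events M (\<lambda>n. {x \<in> space M. n \<in> A x}) {1..}"
    and pr: "\<forall>n\<ge>1. measure M {x \<in> space M. n \<in> A x} = incl_prob s n"
    and f: "finite (\<omega> \<union> \<omega>')" and sub: "\<omega> \<union> \<omega>' \<subseteq> {1..}" and ne: "\<omega> \<union> \<omega>' \<noteq> {}"
  shows "measure M (event_E M A \<omega> \<inter> event_E M A \<omega>') = prod (incl_prob s) (\<omega> \<union> \<omega>')"
proof -
  interpret prob_space M by (rule ps)
  have e: "event_E M A \<omega> \<inter> event_E M A \<omega>' = (\<Inter>n\<in>\<omega> \<union> \<omega>'. {x \<in> space M. n \<in> A x})"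
    unfolding event_E_def using ne by auto
  have "measure M (\<Inter>n\<in>\<omega> \<union> \<omega>'. {x \<in> space M. n \<in> A x}) = (\<Prod>n\<in>\<omega> \<union> \<omega>'. measure M {x \<in> space M. n \<in> A x})"
    using ind f sub ne unfolding indep_events_def by auto
  also have "\<dots> = prod (incl_prob s) (\<omega> \<union> \<omega>')"
    using pr sub by (intro prod.cong) auto
  finally show ?thesis unfolding e .
qed

theorem lemma4:
  fixes s :: nat and \<alpha> :: real
  assumes "s \<ge> 2" and "\<alpha> > 0"
  shows "\<exists>C>0. \<forall>(M :: 'a measure) (A :: 'a \<Rightarrow> nat set).
    prob_space M \<longrightarrow>
    (\<forall>x\<in>space M. A x \<subseteq> {1..}) \<longrightarrow>
    prob_space.indep_events M (\<lambda>n. {x \<in> space M. n \<in> A x}) {1..} \<longrightarrow>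
    (\<forall>n\<ge>1. measure M {x \<in> space M. n \<in> A x} = incl_prob s n) \<longrightarrow>
    (\<forall>i j :: nat. 2 \<le> i \<longrightarrow> i \<le> j \<longrightarrow>
       (\<Sum>(\<omega>, \<omega>') \<in> {(\<omega>, \<omega>'). \<omega> \<in> Omega_I s (real i) (real i + \<alpha> * ln (real i)) \<and>
                             \<omega>' \<in> Omega_I s (real j) (real j + \<alpha> * ln (real j)) \<and>
                             related \<omega> \<omega>'}.
          measure M (event_E M A \<omega> \<inter> event_E M A \<omega>'))
       \<le> C * real i powr (- 1 / real s) * (ln (real i))\<^sup>2 * ln (real j))"
proof -
  interpret ctx s using assms(1) by unfold_locales
  show ?thesis
  proof (intro exI[of _ "CC \<alpha>"] conjI allI impI)
    show "0 < CC \<alpha>" by (rule CC_pos[OF assms(2)])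
    fix M :: "'a measure" and A :: "'a \<Rightarrow> nat set" and i j :: nat
    assume ps: "prob_space M" and "\<forall>x\<in>space M. A x \<subseteq> {1..}"
      and ind: "prob_space.indep_events M (\<lambda>n. {x \<in> space M. n \<in> A x}) {1..}"
      and pr: "\<forall>n\<ge>1. measure M {x \<in> space M. n \<in> A x} = incl_prob s n"
      and i2: "2 \<le> i" and ij: "i \<le> j"
    let ?P = "{(\<omega>, \<omega>'). \<omega> \<in> Omega_I s (real i) (real i + \<alpha> * ln (real i)) \<and>
                             \<omega>' \<in> Omega_I s (real j) (real j + \<alpha> * ln (real j)) \<and> related \<omega> \<omega>'}"
    have "(\<Sum>(\<omega>, \<omega>') \<in> ?P. measure M (event_E M A \<omega> \<inter> event_E M A \<omega>')) = (\<Sum>(\<omega>, \<omega>') \<in> ?P. prod (incl_prob s) (\<omega> \<union> \<omega>'))"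
    proof (intro sum.cong refl)
      fix p assume p: "p \<in> ?P"
      obtain a b where pe: "p = (a, b)" by force
      have a: "a \<in> Omega_I s (real i) (real i + \<alpha> * ln (real i))" and b: "b \<in> Omega_I s (real j) (real j + \<alpha> * ln (real j))"
        and r: "related a b" using p pe by auto
      have "measure M (event_E M A a \<inter> event_E M A b) = prod (incl_prob s) (a \<union> b)"
      proof (rule meas_pair[OF ps ind pr])
        show "finite (a \<union> b)" using Om_props(1)[OF a] Om_props(1)[OF b] by simp
        show "a \<union> b \<subseteq> {1..}" using Om_props(2)[OF a] Om_props(2)[OF b] by simp
        show "a \<union> b \<noteq> {}" using Om_props(4)[OF a] by simp
      qed
      thus "(case p of (\<omega>, \<omega>') \<Rightarrow> measure M (event_E M A \<omega> \<inter> event_E M A \<omega>')) = (case p of (\<omega>, \<omega>') \<Rightarrow> prod (incl_prob s) (\<omega> \<union> \<omega>'))"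
        using pe by simp
    qed
    also have "\<dots> \<le> CC \<alpha> * real i powr (- bt) * (ln (real i))\<^sup>2 * ln (real j)"
      by (rule main_bound[OF assms(2) i2 ij])
    also have "- bt = - 1 / real s" by (simp add: bt_def)
    finally show "(\<Sum>(\<omega>, \<omega>') \<in> ?P. measure M (event_E M A \<omega> \<inter> event_E M A \<omega>')) \<le> CC \<alpha> * real i powr (- 1 / real s) * (ln (real i))\<^sup>2 * ln (real j)" .
  qed
qed


end
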